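(* The map sending a ranked $X$-tree $(\mathcal{N},r)$ to the set $\{\mathcal{P}(\mathcal{S}_i(\mathcal{N})) : 0\le i\le\sigma(r)\}$ induces a bijection between isomorphism classes of ranked $X$-trees and subsets of $\mathfrak{B}(X)$ that contain the partition $\{X\}$ and whose elements are pairwise comparable with respect to $\sqsubseteq$ (i.e. chains of the poset $(\mathfrak{B}(X),\sqsubseteq)$ containing $\{X\}$).
   Context: Let $X$ be a finite non-empty set. A rooted DAG $N=(V,A)$ is a finite directed acyclic graph with a vertex $\rho$ of indegree $0$ (the root) from which every vertex is reachable by a directed path. Leaf: outdegree $0$; tree vertex: indegree $\le1$; reticulation vertex: indegree $\ge2$; if $(u,v)\in A$ then $u$ is a parent of $v$. A reticulation cycle consists of two distinct directed paths with the same start and end vertex and no other common vertices. A rooted $X$-cactus $\mathcal{N}=(N,\varphi)$ is a rooted DAG with a map $\varphi:X\to V$ such that every vertex has indegree at most $2$, no two distinct reticulation cycles share an arc, and $\varphi(X)$ contains all leaves and all tree vertices of outdegree $1$. A rooted $X$-tree is a rooted $X$-cactus without reticulation vertices. A time-stamp function is $t:V\to\mathbb{R}_{\ge0}$ with $t(v)=0$ for $v\in\varphi(X)$, $t(u)>t(v)$ for arcs $(u,v)$ with $v$ not a reticulation vertex, and $t(v)=t(p_1)=t(p_2)$ for each reticulation vertex $v$ with parents $p_1,p_2$. Its size is $\sigma(t)=|t(V)|-1$. A ranking is a time-stamp function $r$ with $r(V)=\{0,\dots,\sigma(r)\}$; a ranked $X$-tree is a rooted $X$-tree with a ranking. Two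 ranked $X$-trees $((V',A'),\varphi'),r')$ and $((V'',A''),\varphi''),r'')$ are isomorphic if there is a digraph isomorphism $f:V'\to V''$ with $f(\varphi'(x))=\varphi''(x)$ for all $x\in X$ and $r'(v)=r''(f(v))$ for all $v\in V'$. A vertex $u$ is a descendant of $v$ if some directed path from the root to $u$ contains $v$; it is a strict descendant if every directed path from the root to $u$ contains $v$, and a non-strict descendant otherwise. $S(u)=\{x\in X:\varphi(x)$ is a strict descendant of $u\}$, $H(u)=\{x\in X:\varphi(x)$ is a non-strict descendant of $u\}$. For a ranked $(\mathcal{N},r)$ and $0\le i\le\sigma(r)$ let $V_i$ be the set of vertices $u$ with $r(u)\le i$ and $r(p)>i$ for all parents $p$ of $u$, and $\mathcal{S}_i(\mathcal{N})=\{(S(u),H(u)):u\in V_i\}\cup\{(H(u),\emptyset):u\in V_i,\ H(u)\neq\emptyset\}$. For a collection $\mathcal{S}$ of pairs $(S,H)$, $\mathcal{P}(\mathcal{S})=\{S:(S,H)\in\mathcal{S}\}$. $\mathfrak{B}(X)$ is the set of partitions of $X$ (sets of non-empty pairwise disjoint subsets with union $X$), and $\mathcal{P}_1\sqsubseteq\mathcal{P}_2$ means every block of $\mathcal{P}_1$ is contained in some block of $\mathcal{P}_2$. *)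

theory Defs
  imports Complex_Main "HOL-Library.Disjoint_Sets"
begin

definition indeg :: "('v \<times> 'v) set \<Rightarrow> 'v \<Rightarrow> nat" where
  "indeg A v = card {u. (u, v) \<in> A}"

definition outdeg :: "('v \<times> 'v) set \<Rightarrow> 'v \<Rightarrow> nat" where
  "outdeg A v = card {w. (v, w) \<in> A}"

definition is_leaf :: "'v set \<Rightarrow> ('v \<times> 'v) set \<Rightarrow> 'v \<Rightarrow> bool" where
  "is_leaf V A v \<longleftrightarrow> v \<in> V \<and> outdeg A v = 0"

definition is_tree_vertex :: "'v set \<Rightarrow> ('v \<times> 'v) set \<Rightarrow> 'v \<Rightarrow> bool" where
  "is_tree_vertex V A v \<longleftrightarrow> v \<in> V \<and> indeg A v \<le> 1"

definition is_reticulation :: "'v set \<Rightarrow> ('v \<times> 'v) set \<Rightarrow> 'v \<Rightarrow> bool" where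
  "is_reticulation V A v \<longleftrightarrow> v \<in> V \<and> indeg A v \<ge> 2"

definition dpath :: "('v \<times> 'v) set \<Rightarrow> 'v list \<Rightarrow> bool" where
  "dpath A p \<longleftrightarrow> p \<noteq> [] \<and> successively (\<lambda>a b. (a, b) \<in> A) p"

definition path_arcs :: "'v list \<Rightarrow> ('v \<times> 'v) set" where
  "path_arcs p = set (zip p (tl p))"

definition is_root :: "'v set \<Rightarrow> ('v \<times> 'v) set \<Rightarrow> 'v \<Rightarrow> bool" where
  "is_root V A \<rho> \<longleftrightarrow> \<rho> \<in> V \<and> indeg A \<rho> = 0 \<and>
     (\<forall>v\<in>V. \<exists>p. dpath A p \<and> hd p = \<rho> \<and> last p = v)"

definition rooted_DAG :: "'v set \<Rightarrow> ('v \<times> 'v) set \<Rightarrow> bool" where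
  "rooted_DAG V A \<longleftrightarrow> finite V \<and> A \<subseteq> V \<times> V \<and> acyclic A \<and> (\<exists>\<rho>. is_root V A \<rho>)"

definition root :: "'v set \<Rightarrow> ('v \<times> 'v) set \<Rightarrow> 'v" where
  "root V A = (THE \<rho>. is_root V A \<rho>)"

definition reticulation_cycle :: "('v \<times> 'v) set \<Rightarrow> 'v list set \<Rightarrow> bool" where
  "reticulation_cycle A C \<longleftrightarrow> (\<exists>p1 p2. C = {p1, p2} \<and> p1 \<noteq> p2 \<and> dpath A p1 \<and> dpath A p2 \<and>
      hd p1 = hd p2 \<and> last p1 = last p2 \<and> set p1 \<inter> set p2 = {hd p1, last p1})"

definition cycle_arcs :: "'v list set \<Rightarrow> ('v \<times> 'v) set" where
  "cycle_arcs C = (\<Union>p\<in>C. path_arcs p)"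

definition rooted_cactus :: "'x set \<Rightarrow> 'v set \<Rightarrow> ('v \<times> 'v) set \<Rightarrow> ('x \<Rightarrow> 'v) \<Rightarrow> bool" where
  "rooted_cactus X V A \<phi> \<longleftrightarrow> rooted_DAG V A \<and> (\<forall>v\<in>V. indeg A v \<le> 2) \<and>
     (\<forall>C1 C2. reticulation_cycle A C1 \<and> reticulation_cycle A C2 \<and> C1 \<noteq> C2 \<longrightarrow>
         cycle_arcs C1 \<inter> cycle_arcs C2 = {}) \<and>
     \<phi> ` X \<subseteq> V \<and>
     (\<forall>v\<in>V. is_leaf V A v \<longrightarrow> v \<in> \<phi> ` X) \<and>
     (\<forall>v\<in>V. is_tree_vertex V A v \<and> outdeg A v = 1 \<longrightarrow> v \<in> \<phi> ` X)"

definition rooted_tree :: "'x set \<Rightarrow> 'v set \<Rightarrow> ('v \<times> 'v) set \<Rightarrow> ('x \<Rightarrow> 'v) \<Rightarrow> bool" where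
  "rooted_tree X V A \<phi> \<longleftrightarrow> rooted_cactus X V A \<phi> \<and> (\<forall>v\<in>V. \<not> is_reticulation V A v)"

definition time_stamp ::
  "'x set \<Rightarrow> 'v set \<Rightarrow> ('v \<times> 'v) set \<Rightarrow> ('x \<Rightarrow> 'v) \<Rightarrow> ('v \<Rightarrow> real) \<Rightarrow> bool" where
  "time_stamp X V A \<phi> t \<longleftrightarrow> (\<forall>v\<in>V. t v \<ge> 0) \<and> (\<forall>x\<in>X. t (\<phi> x) = 0) \<and>
     (\<forall>(u, v)\<in>A. \<not> is_reticulation V A v \<longrightarrow> t u > t v) \<and>
     (\<forall>(p, v)\<in>A. is_reticulation V A v \<longrightarrow> t v = t p)"

definition ts_size :: "'v set \<Rightarrow> ('v \<Rightarrow> real) \<Rightarrow> nat" where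
  "ts_size V t = card (t ` V) - 1"

definition ranking ::
  "'x set \<Rightarrow> 'v set \<Rightarrow> ('v \<times> 'v) set \<Rightarrow> ('x \<Rightarrow> 'v) \<Rightarrow> ('v \<Rightarrow> real) \<Rightarrow> bool" where
  "ranking X V A \<phi> r \<longleftrightarrow> time_stamp X V A \<phi> r \<and> r ` V = real ` {0..ts_size V r}"

definition ranked_tree ::
  "'x set \<Rightarrow> 'v set \<Rightarrow> ('v \<times> 'v) set \<Rightarrow> ('x \<Rightarrow> 'v) \<Rightarrow> ('v \<Rightarrow> real) \<Rightarrow> bool" where
  "ranked_tree X V A \<phi> r \<longleftrightarrow> rooted_tree X V A \<phi> \<and> ranking X V A \<phi> r"

definition ranked_trees :: "'x set \<Rightarrow> ('v set \<times> ('v \<times> 'v) set \<times> ('x \<Rightarrow> 'v) \<times> ('v \<Rightarrow> real)) set" where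
  "ranked_trees X = {(V, A, \<phi>, r). ranked_tree X V A \<phi> r}"

definition ranked_iso ::
  "'x set \<Rightarrow> ('v set \<times> ('v \<times> 'v) set \<times> ('x \<Rightarrow> 'v) \<times> ('v \<Rightarrow> real))
          \<Rightarrow> ('v set \<times> ('v \<times> 'v) set \<times> ('x \<Rightarrow> 'v) \<times> ('v \<Rightarrow> real)) \<Rightarrow> bool" where
  "ranked_iso X T1 T2 = (case T1 of (V1, A1, \<phi>1, r1) \<Rightarrow> case T2 of (V2, A2, \<phi>2, r2) \<Rightarrow>
     (\<exists>f. bij_betw f V1 V2 \<and> (\<forall>u\<in>V1. \<forall>v\<in>V1. (u, v) \<in> A1 \<longleftrightarrow> (f u, f v) \<in> A2) \<and>
          (\<forall>x\<in>X. f (\<phi>1 x) = \<phi>2 x) \<and> (\<forall>v\<in>V1. r1 v = r2 (f v))))"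

definition root_paths :: "'v set \<Rightarrow> ('v \<times> 'v) set \<Rightarrow> 'v \<Rightarrow> 'v list set" where
  "root_paths V A u = {p. dpath A p \<and> hd p = root V A \<and> last p = u}"

definition descendant :: "'v set \<Rightarrow> ('v \<times> 'v) set \<Rightarrow> 'v \<Rightarrow> 'v \<Rightarrow> bool" where
  "descendant V A u v \<longleftrightarrow> (\<exists>p\<in>root_paths V A u. v \<in> set p)"

definition strict_descendant :: "'v set \<Rightarrow> ('v \<times> 'v) set \<Rightarrow> 'v \<Rightarrow> 'v \<Rightarrow> bool" where
  "strict_descendant V A u v \<longleftrightarrow> (\<forall>p\<in>root_paths V A u. v \<in> set p)"

definition nonstrict_descendant :: "'v set \<Rightarrow> ('v \<times> 'v) set \<Rightarrow> 'v \<Rightarrow> 'v \<Rightarrow> bool" where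
  "nonstrict_descendant V A u v \<longleftrightarrow> descendant V A u v \<and> \<not> strict_descendant V A u v"

definition Sset :: "'x set \<Rightarrow> 'v set \<Rightarrow> ('v \<times> 'v) set \<Rightarrow> ('x \<Rightarrow> 'v) \<Rightarrow> 'v \<Rightarrow> 'x set" where
  "Sset X V A \<phi> u = {x\<in>X. strict_descendant V A (\<phi> x) u}"

definition Hset :: "'x set \<Rightarrow> 'v set \<Rightarrow> ('v \<times> 'v) set \<Rightarrow> ('x \<Rightarrow> 'v) \<Rightarrow> 'v \<Rightarrow> 'x set" where
  "Hset X V A \<phi> u = {x\<in>X. nonstrict_descendant V A (\<phi> x) u}"

definition level_vertices :: "'v set \<Rightarrow> ('v \<times> 'v) set \<Rightarrow> ('v \<Rightarrow> real) \<Rightarrow> nat \<Rightarrow> 'v set" where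
  "level_vertices V A r i = {u\<in>V. r u \<le> real i \<and> (\<forall>p. (p, u) \<in> A \<longrightarrow> r p > real i)}"

definition Scoll ::
  "'x set \<Rightarrow> 'v set \<Rightarrow> ('v \<times> 'v) set \<Rightarrow> ('x \<Rightarrow> 'v) \<Rightarrow> ('v \<Rightarrow> real) \<Rightarrow> nat \<Rightarrow> ('x set \<times> 'x set) set" where
  "Scoll X V A \<phi> r i =
     {(Sset X V A \<phi> u, Hset X V A \<phi> u) | u. u \<in> level_vertices V A r i} \<union>
     {(Hset X V A \<phi> u, {}) | u. u \<in> level_vertices V A r i \<and> Hset X V A \<phi> u \<noteq> {}}"

definition Pcoll :: "('x set \<times> 'x set) set \<Rightarrow> 'x set set" where
  "Pcoll S = fst ` S"

definition partition_chain_of ::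
  "'x set \<Rightarrow> ('v set \<times> ('v \<times> 'v) set \<times> ('x \<Rightarrow> 'v) \<times> ('v \<Rightarrow> real)) \<Rightarrow> 'x set set set" where
  "partition_chain_of X T = (case T of (V, A, \<phi>, r) \<Rightarrow>
     {Pcoll (Scoll X V A \<phi> r i) | i. i \<le> ts_size V r})"

definition refines :: "'x set set \<Rightarrow> 'x set set \<Rightarrow> bool" where
  "refines P1 P2 \<longleftrightarrow> (\<forall>B\<in>P1. \<exists>B'\<in>P2. B \<subseteq> B')"

definition partitions :: "'x set \<Rightarrow> 'x set set set" where
  "partitions X = {P. partition_on X P}"

definition chains_with_top :: "'x set \<Rightarrow> 'x set set set set" where
  "chains_with_top X = {C. C \<subseteq> partitions X \<and> {X} \<in> C \<and>
      (\<forall>P\<in>C. \<forall>Q\<in>C. refines P Q \<or> refines Q P)}"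

end

theory Submission
  imports Defs
begin


lemma succ_rt:
  "successively (\<lambda>a b. (a, b) \<in> A) (x#xs) \<Longrightarrow> y \<in> set (x#xs) \<Longrightarrow>
   (x, y) \<in> A\<^sup>* \<and> (y, last (x#xs)) \<in> A\<^sup>*"
proof (induction xs arbitrary: x y)
  case Nil then show ?case by simp
next
  case (Cons z zs)
  from Cons.prems(1) have xz: "(x,z) \<in> A" and s: "successively (\<lambda>a b. (a, b) \<in> A) (z#zs)" by simp_all
  have IHz: "(z, last (z#zs)) \<in> A\<^sup>*" using Cons.IH[OF s, where y=z] by simp
  show ?case
  proof (cases "y = x")
    case True then show ?thesis using xz IHz by auto
  next
    case False then have "y \<in> set (z#zs)" using Cons.prems(2) by simp
    then have "(z, y) \<in> A\<^sup>* \<and> (y, last (z#zs)) \<in> A\<^sup>*" using Cons.IH[OF s] by blast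
    then show ?thesis using xz by (simp add: converse_rtrancl_into_rtrancl)
  qed
qed

lemma dpath_rt: "dpath A p \<Longrightarrow> y \<in> set p \<Longrightarrow> (hd p, y) \<in> A\<^sup>* \<and> (y, last p) \<in> A\<^sup>*"
proof -
  assume d: "dpath A p" and y: "y \<in> set p"
  then obtain a as where p: "p = a # as" unfolding dpath_def by (cases p) auto
  then show ?thesis using succ_rt[of A a as y] d y by (simp add: dpath_def)
qed

lemma dpath_trancl: "dpath A p \<Longrightarrow> length p \<ge> 2 \<Longrightarrow> (hd p, last p) \<in> A\<^sup>+"
proof -
  assume d: "dpath A p" and l: "length p \<ge> 2"
  then obtain a b rest where p: "p = a#b#rest" by (metis Suc_le_length_iff numeral_2_eq_2)
  then have ab: "(a,b) \<in> A" and "dpath A (b#rest)" using d by (auto simp: dpath_def)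
  then have "(b, last (b#rest)) \<in> A\<^sup>*" using dpath_rt[of A "b#rest" b] by simp
  then show ?thesis using ab p by simp
qed

lemma rt_dpath: "(a, b) \<in> A\<^sup>* \<Longrightarrow> \<exists>p. dpath A p \<and> hd p = a \<and> last p = b"
proof (induction rule: rtrancl_induct)
  case base then show ?case by (rule exI[of _ "[a]"]) (simp add: dpath_def)
next
  case (step y z)
  then obtain p where p: "dpath A p" "hd p = a" "last p = y" by blast
  have "dpath A (p @ [z])" using p step(2) by (auto simp: dpath_def successively_append_iff)
  then show ?case using p by (intro exI[of _ "p @ [z]"]) (auto simp: dpath_def)
qed

lemma dpath_concat:
  assumes "dpath A p" "dpath A q" "last p = hd q"
  shows "dpath A (p @ tl q) \<and> hd (p @ tl q) = hd p \<and> last (p @ tl q) = last q"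
proof (cases "tl q = []")
  case True then show ?thesis using assms by (cases q) (auto simp: dpath_def)
next
  case False
  then obtain b c cs where q: "q = b # c # cs" using assms(2) unfolding dpath_def
    by (metis list.collapse)
  then have "(hd q, c) \<in> A" using assms(2) by (auto simp: dpath_def)
  then show ?thesis using assms q unfolding dpath_def
    by (auto simp: successively_append_iff)
qed

lemma is_rootD: "is_root V A \<rho> \<Longrightarrow> \<rho> \<in> V" "is_root V A \<rho> \<Longrightarrow> indeg A \<rho> = 0"
  "is_root V A \<rho> \<Longrightarrow> v \<in> V \<Longrightarrow> \<exists>p. dpath A p \<and> hd p = \<rho> \<and> last p = v"
  by (simp_all add: is_root_def)

definition uparents :: "('v \<times> 'v) set \<Rightarrow> bool" where
  "uparents A \<longleftrightarrow> (\<forall>u u' v. (u,v) \<in> A \<longrightarrow> (u',v) \<in> A \<longrightarrow> u = u')"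

lemma dpath_unique:
  assumes up: "uparents A" and ac: "acyclic A"
  shows "dpath A p \<Longrightarrow> dpath A q \<Longrightarrow> hd p = hd q \<Longrightarrow> last p = last q \<Longrightarrow> p = q"
proof (induction p arbitrary: q rule: rev_induct)
  case Nil then show ?case by (simp add: dpath_def)
next
  case (snoc x xs)
  show ?case
  proof (cases "xs = []")
    case True
    then have hx: "hd q = x" "last q = x" using snoc by auto
    have "length q < 2"
    proof (rule ccontr)
      assume "\<not> length q < 2"
      then have "(x,x) \<in> A\<^sup>+" using dpath_trancl[OF snoc(3)] hx by simp
      then show False using ac by (simp add: acyclic_def)
    qed
    then have "q = [x]" using hx snoc(3) unfolding dpath_def
      by (cases q) auto
    then show ?thesis using True by simp
  next
    case False
    show ?thesis
    proof (cases "tl q = []")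
      case True
      then have q: "q = [hd q]" using snoc(3) unfolding dpath_def by (metis list.collapse)
      have "length (xs @ [x]) \<ge> 2" using False by (cases xs) auto
      then have "(hd (xs@[x]), last (xs@[x])) \<in> A\<^sup>+" using dpath_trancl[OF snoc(2)] by simp
      then have "(hd q, hd q) \<in> A\<^sup>+" using snoc(4,5) q by (metis last.simps)
      then show ?thesis using ac by (simp add: acyclic_def)
    next
      case False2: False
      obtain ys y where qy: "q = ys @ [y]" using snoc(3) unfolding dpath_def by (metis rev_exhaust)
      have ys: "ys \<noteq> []" using False2 qy by auto
      have y: "y = x" using snoc(5) qy by simp
      have a1: "(last xs, x) \<in> A" using snoc(2) False by (auto simp: dpath_def successively_append_iff)
      have a2: "(last ys, x) \<in> A" using snoc(3) ys qy y by (auto simp: dpath_def successively_append_iff)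
      have "last xs = last ys" using up a1 a2 unfolding uparents_def by blast
      moreover have "dpath A xs" "dpath A ys" using snoc(2,3) False ys qy
        by (auto simp: dpath_def successively_append_iff)
      moreover have "hd xs = hd ys" using snoc(4) False ys qy by simp
      ultimately have "xs = ys" using snoc.IH by blast
      then show ?thesis using qy y by simp
    qed
  qed
qed



locale rtree =
  fixes X :: "'x set" and V :: "'v set" and A :: "('v \<times> 'v) set"
    and \<phi> :: "'x \<Rightarrow> 'v" and r :: "'v \<Rightarrow> real"
  assumes rt: "ranked_tree X V A \<phi> r"
begin

lemma rc: "rooted_cactus X V A \<phi>" and noret0: "\<forall>v\<in>V. \<not> is_reticulation V A v"
  and rk: "ranking X V A \<phi> r"
  using rt unfolding ranked_tree_def rooted_tree_def by simp_all

lemma rd: "rooted_DAG V A" and phiV0: "\<phi> ` X \<subseteq> V"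
  and leaves0: "\<forall>v\<in>V. is_leaf V A v \<longrightarrow> v \<in> \<phi> ` X"
  and deg10: "\<forall>v\<in>V. is_tree_vertex V A v \<and> outdeg A v = 1 \<longrightarrow> v \<in> \<phi> ` X"
  using rc unfolding rooted_cactus_def by simp_all

lemma finV: "finite V" and AV: "A \<subseteq> V \<times> V" and acyc: "acyclic A"
  and exroot: "\<exists>\<rho>. is_root V A \<rho>"
  using rd unfolding rooted_DAG_def by simp_all

lemma phiV: "x \<in> X \<Longrightarrow> \<phi> x \<in> V"
  using phiV0 by blast

lemma leaves: "v \<in> V \<Longrightarrow> outdeg A v = 0 \<Longrightarrow> v \<in> \<phi> ` X"
  using leaves0 unfolding is_leaf_def by blast

lemma deg1: "v \<in> V \<Longrightarrow> indeg A v \<le> 1 \<Longrightarrow> outdeg A v = 1 \<Longrightarrow> v \<in> \<phi> ` X"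
  using deg10 unfolding is_tree_vertex_def by blast

lemma noret: "v \<in> V \<Longrightarrow> indeg A v \<le> 1"
  using noret0 unfolding is_reticulation_def by force

lemma finA: "finite A" using finite_subset[OF AV] finV by auto

lemma inV1: "(u,v) \<in> A \<Longrightarrow> u \<in> V" and inV2: "(u,v) \<in> A \<Longrightarrow> v \<in> V"
  using AV by auto

lemma ts: "time_stamp X V A \<phi> r" using rk unfolding ranking_def by simp

lemma r_nonneg: "v \<in> V \<Longrightarrow> r v \<ge> 0"
  using ts unfolding time_stamp_def by blast

lemma r_phi: "x \<in> X \<Longrightarrow> r (\<phi> x) = 0"
  using ts unfolding time_stamp_def by blast

lemma r_arc: "(u,v) \<in> A \<Longrightarrow> r v < r u"
proof -
  assume a: "(u,v) \<in> A"
  then have "\<not> is_reticulation V A v" using noret0 inV2[OF a] by blast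
  moreover have "\<forall>(u, v)\<in>A. \<not> is_reticulation V A v \<longrightarrow> r u > r v"
    using ts unfolding time_stamp_def by blast
  ultimately show ?thesis using a by blast
qed

definition \<sigma> where "\<sigma> = ts_size V r"

lemma r_range: "r ` V = real ` {0..\<sigma>}"
  using rk unfolding ranking_def \<sigma>_def by simp

lemma fin_par: "finite {u. (u,v) \<in> A}"
  by (rule finite_subset[of _ "fst ` A"]) (use finA in force)+

lemma fin_ch: "finite {w. (v,w) \<in> A}"
  by (rule finite_subset[of _ "snd ` A"]) (use finA in force)+

lemma uparents: "uparents A"
  unfolding uparents_def
proof (intro allI impI)
  fix u u' v assume a: "(u,v) \<in> A" "(u',v) \<in> A"
  have "card {u. (u,v) \<in> A} \<le> Suc 0" using noret[OF inV2[OF a(1)]] by (simp add: indeg_def)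
  then have "\<forall>a1\<in>{u. (u,v) \<in> A}. \<forall>a2\<in>{u. (u,v) \<in> A}. a1 = a2"
    by (simp only: card_le_Suc0_iff_eq[OF fin_par[of v]])
  then show "u = u'" using a by blast
qed

lemma upar: "(u,v) \<in> A \<Longrightarrow> (u',v) \<in> A \<Longrightarrow> u = u'"
  using uparents unfolding uparents_def by blast

lemma indeg0: "indeg A v = 0 \<Longrightarrow> (u,v) \<notin> A"
proof -
  assume "indeg A v = 0"
  then have "{u. (u,v) \<in> A} = {}" unfolding indeg_def using card_0_eq[OF fin_par[of v]] by blast
  then show ?thesis by blast
qed

lemma root_unique: "is_root V A a \<Longrightarrow> is_root V A b \<Longrightarrow> a = b"
proof -
  assume a: "is_root V A a" and b: "is_root V A b"
  have "b \<in> V" using b by (simp add: is_root_def)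
  then obtain p where p: "dpath A p" "hd p = a" "last p = b" using a unfolding is_root_def by blast
  show "a = b"
  proof (rule ccontr)
    assume "a \<noteq> b"
    have "b \<in> set p" using p(1,3) unfolding dpath_def by auto
    then have "(a,b) \<in> A\<^sup>*" using dpath_rt[OF p(1)] p(2) by blast
    then have ab: "(a,b) \<in> A\<^sup>+" using \<open>a \<noteq> b\<close> by (simp add: rtrancl_eq_or_trancl)
    obtain z where "(z,b) \<in> A" using tranclD2[OF ab] by blast
    moreover have "indeg A b = 0" using b by (simp add: is_root_def)
    ultimately show False using indeg0 by blast
  qed
qed

definition rho where "rho = root V A"

lemma is_root_rho: "is_root V A rho"
proof -
  obtain a where a: "is_root V A a" using exroot by blast
  show ?thesis unfolding rho_def root_def
    by (rule theI[of "is_root V A" a]) (rule a, rule root_unique[OF _ a])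
qed

lemma rhoV: "rho \<in> V" using is_rootD(1)[OF is_root_rho] .

lemma no_par_rho: "(u, rho) \<notin> A"
proof -
  have "indeg A rho = 0" using is_rootD(2)[OF is_root_rho] .
  then show ?thesis using indeg0 by blast
qed

lemma reach: "v \<in> V \<Longrightarrow> (rho, v) \<in> A\<^sup>*"
proof -
  assume v: "v \<in> V"
  then obtain p where p: "dpath A p" "hd p = rho" "last p = v"
    using is_rootD(3)[OF is_root_rho] by blast
  have "v \<in> set p" using p(1,3) unfolding dpath_def by auto
  then have "(hd p, v) \<in> A\<^sup>*" using dpath_rt[OF p(1)] by blast
  then show ?thesis using p(2) by simp
qed

lemma rt_V: "(a,b) \<in> A\<^sup>* \<Longrightarrow> b \<in> V \<Longrightarrow> a \<in> V"
  by (cases rule: converse_rtranclE) (auto intro: inV1)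

lemma r_trancl: "(a,b) \<in> A\<^sup>+ \<Longrightarrow> r b < r a"
  by (induction rule: trancl_induct) (use r_arc in force)+

lemma r_rtrancl: "(a,b) \<in> A\<^sup>* \<Longrightarrow> r b \<le> r a"
  by (metis eq_iff less_imp_le r_trancl rtrancl_eq_or_trancl)

lemma rootpath_set:
  assumes u: "u \<in> V" and p: "p \<in> root_paths V A u"
  shows "w \<in> set p \<longleftrightarrow> (w, u) \<in> A\<^sup>*"
proof -
  have pp: "dpath A p" "hd p = rho" "last p = u" using p unfolding root_paths_def rho_def by auto
  show ?thesis
  proof
    assume "w \<in> set p"
    then have "(w, last p) \<in> A\<^sup>*" using dpath_rt[OF pp(1)] by blast
    then show "(w,u) \<in> A\<^sup>*" using pp(3) by simp
  next
    assume wu: "(w,u) \<in> A\<^sup>*"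
    then have wV: "w \<in> V" using rt_V u by blast
    obtain q where q: "dpath A q" "hd q = w" "last q = u" using rt_dpath[OF wu] by blast
    obtain p' where p': "dpath A p'" "hd p' = rho" "last p' = w"
      using is_rootD(3)[OF is_root_rho wV] by blast
    have c: "dpath A (p' @ tl q)" "hd (p' @ tl q) = rho" "last (p' @ tl q) = u"
      using dpath_concat[OF p'(1) q(1)] p' q by simp_all
    have "p' @ tl q = p"
      by (rule dpath_unique[OF uparents acyc c(1) pp(1)]) (simp_all add: c pp)
    moreover have "w \<in> set p'" using p'(1,3) unfolding dpath_def by auto
    ultimately show "w \<in> set p" by auto
  qed
qed

lemma rootpaths_ne: "u \<in> V \<Longrightarrow> \<exists>p. p \<in> root_paths V A u"
proof -
  assume "u \<in> V"
  then obtain p where "dpath A p" "hd p = rho" "last p = u" using is_rootD(3)[OF is_root_rho] by blast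
  then have "p \<in> root_paths V A u" unfolding root_paths_def rho_def by simp
  then show ?thesis by blast
qed

lemma strict_desc: "u \<in> V \<Longrightarrow> strict_descendant V A u w \<longleftrightarrow> (w,u) \<in> A\<^sup>*"
  unfolding strict_descendant_def using rootpath_set rootpaths_ne by blast

lemma desc: "u \<in> V \<Longrightarrow> descendant V A u w \<longleftrightarrow> (w,u) \<in> A\<^sup>*"
  unfolding descendant_def using rootpath_set rootpaths_ne by blast

definition cl where "cl u = {x\<in>X. (u, \<phi> x) \<in> A\<^sup>*}"

lemma Sset_cl: "Sset X V A \<phi> u = cl u"
  unfolding Sset_def cl_def using strict_desc phiV by auto

lemma Hset_empty: "Hset X V A \<phi> u = {}"
  unfolding Hset_def nonstrict_descendant_def using strict_desc desc phiV by auto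

abbreviation L where "L i \<equiv> level_vertices V A r i"

lemma Pcoll_eq: "Pcoll (Scoll X V A \<phi> r i) = cl ` L i"
  unfolding Pcoll_def Scoll_def Sset_cl Hset_empty by force

lemma comp: "(a,y) \<in> A\<^sup>* \<Longrightarrow> (b,y) \<in> A\<^sup>* \<Longrightarrow> (a,b) \<in> A\<^sup>* \<or> (b,a) \<in> A\<^sup>*"
proof (induction arbitrary: b rule: rtrancl_induct)
  case base then show ?case by simp
next
  case (step y z)
  have ay: "(a,y) \<in> A\<^sup>*" and yz: "(y,z) \<in> A" by fact+
  from \<open>(b,z) \<in> A\<^sup>*\<close> show ?case
  proof (cases rule: rtranclE)
    case base
    have "(a,z) \<in> A\<^sup>*" using ay yz by (rule rtrancl_into_rtrancl)
    then show ?thesis using base by simp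
  next
    case (step y')
    then have "y' = y" using upar yz by blast
    then have "(b,y) \<in> A\<^sup>*" using step by simp
    then show ?thesis by (rule step.IH)
  qed
qed

lemma cl_sub: "(u,v) \<in> A\<^sup>* \<Longrightarrow> cl v \<subseteq> cl u"
  unfolding cl_def by auto

lemma leaf_below: "u \<in> V \<Longrightarrow> \<exists>x\<in>X. (u, \<phi> x) \<in> A\<^sup>*"
proof -
  assume u: "u \<in> V"
  define D where "D = {w\<in>V. (u,w) \<in> A\<^sup>*}"
  have fD: "finite (r ` D)" using finV unfolding D_def by auto
  have "u \<in> D" using u unfolding D_def by auto
  then have nD: "r ` D \<noteq> {}" by blast
  have "Min (r ` D) \<in> r ` D" by (rule Min_in[OF fD nD])
  then obtain w where w: "w \<in> D" "Min (r ` D) = r w" by blast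
  have "{c. (w,c) \<in> A} = {}"
  proof (rule ccontr)
    assume "{c. (w,c) \<in> A} \<noteq> {}"
    then obtain c where c: "(w,c) \<in> A" by blast
    then have "c \<in> D" using w(1) inV2[OF c] unfolding D_def by auto
    then have "Min (r ` D) \<le> r c" using fD by simp
    then show False using r_arc[OF c] w(2) by simp
  qed
  then have "outdeg A w = 0" by (simp add: outdeg_def)
  moreover have "w \<in> V" using w(1) unfolding D_def by simp
  ultimately have "w \<in> \<phi> ` X" using leaves by blast
  then obtain x where x: "x \<in> X" "w = \<phi> x" by blast
  have "(u, w) \<in> A\<^sup>*" using w(1) unfolding D_def by simp
  then show ?thesis using x by blast
qed

lemma cl_ne: "u \<in> V \<Longrightarrow> cl u \<noteq> {}"
  using leaf_below unfolding cl_def by blast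

lemma phi_nochild: "x \<in> X \<Longrightarrow> (\<phi> x, c) \<notin> A"
proof
  assume x: "x \<in> X" and a: "(\<phi> x, c) \<in> A"
  have "r c < r (\<phi> x)" by (rule r_arc[OF a])
  moreover have "r c \<ge> 0" by (rule r_nonneg[OF inV2[OF a]])
  ultimately show False using r_phi[OF x] by simp
qed

lemma two_children:
  assumes a: "(u,c) \<in> A" shows "\<exists>c'. (u,c') \<in> A \<and> c' \<noteq> c"
proof (rule ccontr)
  assume n: "\<not> ?thesis"
  have "{w. (u,w) \<in> A} = {c}"
  proof
    show "{w. (u,w) \<in> A} \<subseteq> {c}" using n by blast
    show "{c} \<subseteq> {w. (u,w) \<in> A}" using a by blast
  qed
  then have o: "outdeg A u = 1" by (simp add: outdeg_def)
  have uV: "u \<in> V" by (rule inV1[OF a])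
  have "u \<in> \<phi> ` X" by (rule deg1[OF uV noret[OF uV] o])
  then obtain x where x: "x \<in> X" "u = \<phi> x" by blast
  have "(\<phi> x, c) \<in> A" using a x(2) by simp
  then show False using phi_nochild[OF x(1)] by blast
qed

lemma no_loop: "(u,u) \<notin> A\<^sup>+"
  using acyc by (simp add: acyclic_def)

lemma cl_strict: "(u,v) \<in> A\<^sup>+ \<Longrightarrow> cl v \<subset> cl u"
proof -
  assume uv: "(u,v) \<in> A\<^sup>+"
  have sub: "cl v \<subseteq> cl u" by (rule cl_sub[OF trancl_into_rtrancl[OF uv]])
  obtain c where c: "(u,c) \<in> A" "(c,v) \<in> A\<^sup>*" using tranclD[OF uv] by blast
  obtain c' where c': "(u,c') \<in> A" "c' \<noteq> c" using two_children[OF c(1)] by blast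
  obtain x where x: "x \<in> X" "(c', \<phi> x) \<in> A\<^sup>*" using leaf_below[OF inV2[OF c'(1)]] by blast
  have "(u, \<phi> x) \<in> A\<^sup>*" using c'(1) x(2) by (rule converse_rtrancl_into_rtrancl)
  then have xu: "x \<in> cl u" using x(1) unfolding cl_def by simp
  have "x \<notin> cl v"
  proof
    assume "x \<in> cl v"
    then have "(v, \<phi> x) \<in> A\<^sup>*" unfolding cl_def by simp
    then have cx: "(c, \<phi> x) \<in> A\<^sup>*" using c(2) by simp
    have "(c,c') \<in> A\<^sup>* \<or> (c',c) \<in> A\<^sup>*" by (rule comp[OF cx x(2)])
    then have "(c,c') \<in> A\<^sup>+ \<or> (c',c) \<in> A\<^sup>+" using c'(2) by (auto simp: rtrancl_eq_or_trancl)
    then show False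
    proof
      assume cc: "(c,c') \<in> A\<^sup>+"
      obtain z where z: "(c,z) \<in> A\<^sup>*" "(z,c') \<in> A" using tranclD2[OF cc] by blast
      have "z = u" by (rule upar[OF z(2) c'(1)])
      then have "(c,u) \<in> A\<^sup>*" using z(1) by simp
      then have "(u,u) \<in> A\<^sup>+" using c(1) by (rule rtrancl_into_trancl2[rotated])
      then show False using no_loop by blast
    next
      assume cc: "(c',c) \<in> A\<^sup>+"
      obtain z where z: "(c',z) \<in> A\<^sup>*" "(z,c) \<in> A" using tranclD2[OF cc] by blast
      have "z = u" by (rule upar[OF z(2) c(1)])
      then have "(c',u) \<in> A\<^sup>*" using z(1) by simp
      then have "(u,u) \<in> A\<^sup>+" using c'(1) by (rule rtrancl_into_trancl2[rotated])
      then show False using no_loop by blast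
    qed
  qed
  then show ?thesis using sub xu by blast
qed

lemma cl_inj: "u \<in> V \<Longrightarrow> v \<in> V \<Longrightarrow> cl u = cl v \<Longrightarrow> u = v"
proof (rule ccontr)
  assume u: "u \<in> V" and v: "v \<in> V" and e: "cl u = cl v" and ne: "u \<noteq> v"
  obtain x where x: "x \<in> cl u" using cl_ne[OF u] by blast
  have ux: "(u, \<phi> x) \<in> A\<^sup>*" using x unfolding cl_def by simp
  have vx: "(v, \<phi> x) \<in> A\<^sup>*" using x e unfolding cl_def by simp
  have "(u,v) \<in> A\<^sup>* \<or> (v,u) \<in> A\<^sup>*" by (rule comp[OF ux vx])
  then have "(u,v) \<in> A\<^sup>+ \<or> (v,u) \<in> A\<^sup>+" using ne by (auto simp: rtrancl_eq_or_trancl)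
  then show False using cl_strict e by blast
qed

end


context rtree begin

lemma L_iff: "u \<in> L i \<longleftrightarrow> u \<in> V \<and> r u \<le> real i \<and> (\<forall>p. (p,u) \<in> A \<longrightarrow> r p > real i)"
  unfolding level_vertices_def by simp

lemma exists_level:
  assumes x: "x \<in> X" shows "\<exists>u\<in>L i. (u, \<phi> x) \<in> A\<^sup>*"
proof -
  define S where "S = {w\<in>V. (w, \<phi> x) \<in> A\<^sup>* \<and> r w \<le> real i}"
  have fS: "finite (r ` S)" using finV unfolding S_def by auto
  have "\<phi> x \<in> S" using phiV[OF x] r_phi[OF x] unfolding S_def by simp
  then have nS: "r ` S \<noteq> {}" by blast
  have "Max (r ` S) \<in> r ` S" by (rule Max_in[OF fS nS])
  then obtain w where w: "w \<in> S" "Max (r ` S) = r w" by blast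
  have "w \<in> L i"
    unfolding L_iff
  proof (intro conjI allI impI)
    show "w \<in> V" "r w \<le> real i" using w(1) unfolding S_def by simp_all
  next
    fix p assume p: "(p,w) \<in> A"
    show "r p > real i"
    proof (rule ccontr)
      assume "\<not> r p > real i"
      moreover have "(p, \<phi> x) \<in> A\<^sup>*" using p w(1) unfolding S_def
        by (simp add: converse_rtrancl_into_rtrancl)
      ultimately have "p \<in> S" using inV1[OF p] unfolding S_def by simp
      then have "r p \<le> Max (r ` S)" using fS by simp
      then show False using r_arc[OF p] w(2) by simp
    qed
  qed
  moreover have "(w, \<phi> x) \<in> A\<^sup>*" using w(1) unfolding S_def by simp
  ultimately show ?thesis by blast
qed

lemma trancl_par:
  assumes "(u,w) \<in> A\<^sup>+" shows "\<exists>z. (u,z) \<in> A\<^sup>* \<and> (z,w) \<in> A"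
  using tranclD2[OF assms] .

lemma level_below:
  assumes u: "u \<in> L j" and w: "w \<in> L k" and jk: "j \<le> k" and uw: "(u,w) \<in> A\<^sup>+"
  shows False
proof -
  obtain z where z: "(u,z) \<in> A\<^sup>*" "(z,w) \<in> A" using tranclD2[OF uw] by blast
  have "r z \<le> r u" by (rule r_rtrancl[OF z(1)])
  moreover have "r u \<le> real j" using u unfolding L_iff by simp
  moreover have "r z > real k" using w z(2) unfolding L_iff by blast
  ultimately show False using jk by simp
qed

lemma unique_level:
  assumes u: "u \<in> L i" and u': "u' \<in> L i" and a: "(u, y) \<in> A\<^sup>*" and b: "(u', y) \<in> A\<^sup>*"
  shows "u = u'"
proof (rule ccontr)
  assume ne: "u \<noteq> u'"
  have "(u,u') \<in> A\<^sup>* \<or> (u',u) \<in> A\<^sup>*" by (rule comp[OF a b])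
  then have "(u,u') \<in> A\<^sup>+ \<or> (u',u) \<in> A\<^sup>+" using ne by (auto simp: rtrancl_eq_or_trancl)
  then show False
  proof
    assume "(u,u') \<in> A\<^sup>+" then show False using level_below[OF u u' le_refl] by blast
  next
    assume "(u',u) \<in> A\<^sup>+" then show False using level_below[OF u' u le_refl] by blast
  qed
qed

lemma LV: "u \<in> L i \<Longrightarrow> u \<in> V" unfolding L_iff by simp

lemma partition_L: "partition_on X (cl ` L i)"
proof (rule partition_onI)
  show "\<Union> (cl ` L i) = X"
  proof
    show "\<Union> (cl ` L i) \<subseteq> X" unfolding cl_def by blast
    show "X \<subseteq> \<Union> (cl ` L i)"
    proof
      fix x assume x: "x \<in> X"
      obtain u where u: "u \<in> L i" "(u, \<phi> x) \<in> A\<^sup>*" using exists_level[OF x] by blast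
      then have "x \<in> cl u" using x unfolding cl_def by simp
      then show "x \<in> \<Union> (cl ` L i)" using u(1) by blast
    qed
  qed
next
  fix p q assume p: "p \<in> cl ` L i" and q: "q \<in> cl ` L i" and ne: "p \<noteq> q"
  obtain u where u: "u \<in> L i" "p = cl u" using p by blast
  obtain u' where u': "u' \<in> L i" "q = cl u'" using q by blast
  show "disjnt p q"
    unfolding disjnt_def
  proof (rule ccontr)
    assume "p \<inter> q \<noteq> {}"
    then obtain x where "x \<in> cl u" "x \<in> cl u'" using u u' by blast
    then have "(u, \<phi> x) \<in> A\<^sup>*" "(u', \<phi> x) \<in> A\<^sup>*" unfolding cl_def by simp_all
    then have "u = u'" using unique_level[OF u(1) u'(1)] by blast
    then show False using u u' ne by simp
  qed
next
  show "{} \<notin> cl ` L i"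
  proof
    assume "{} \<in> cl ` L i"
    then obtain u where "u \<in> L i" "cl u = {}" by auto
    then show False using cl_ne[OF LV] by blast
  qed
qed

lemma refines_L:
  assumes jk: "j \<le> k" shows "refines (cl ` L j) (cl ` L k)"
  unfolding refines_def
proof
  fix B assume "B \<in> cl ` L j"
  then obtain u where u: "u \<in> L j" "B = cl u" by blast
  obtain x where x: "x \<in> cl u" using cl_ne[OF LV[OF u(1)]] by blast
  have xX: "x \<in> X" and ux: "(u, \<phi> x) \<in> A\<^sup>*" using x unfolding cl_def by simp_all
  obtain w where w: "w \<in> L k" "(w, \<phi> x) \<in> A\<^sup>*" using exists_level[OF xX] by blast
  have "(u,w) \<in> A\<^sup>* \<or> (w,u) \<in> A\<^sup>*" by (rule comp[OF ux w(2)])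
  moreover have "(u,w) \<notin> A\<^sup>+" using level_below[OF u(1) w(1) jk] by blast
  ultimately have "(w,u) \<in> A\<^sup>*" by (auto simp: rtrancl_eq_or_trancl)
  then have "cl u \<subseteq> cl w" by (rule cl_sub)
  then show "\<exists>B'\<in>cl ` L k. B \<subseteq> B'" using u(2) w(1) by blast
qed

lemma r_nat: "u \<in> V \<Longrightarrow> \<exists>k\<le>\<sigma>. r u = real k"
proof -
  assume "u \<in> V"
  then have "r u \<in> real ` {0..\<sigma>}" using r_range by blast
  then show ?thesis by auto
qed

lemma r_le_sigma: "u \<in> V \<Longrightarrow> r u \<le> real \<sigma>"
proof -
  assume "u \<in> V"
  then obtain k where "k \<le> \<sigma>" "r u = real k" using r_nat by blast
  then show ?thesis by simp
qed

lemma in_own_level: "u \<in> V \<Longrightarrow> r u = real k \<Longrightarrow> u \<in> L k"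
proof -
  assume u: "u \<in> V" "r u = real k"
  have "\<forall>p. (p,u) \<in> A \<longrightarrow> r p > real k"
  proof (intro allI impI)
    fix p assume "(p,u) \<in> A"
    then have "r u < r p" by (rule r_arc)
    then show "r p > real k" using u(2) by simp
  qed
  then show ?thesis unfolding L_iff using u by simp
qed

lemma L_sigma: "L \<sigma> = {rho}"
proof
  show "L \<sigma> \<subseteq> {rho}"
  proof
    fix u assume u: "u \<in> L \<sigma>"
    show "u \<in> {rho}"
    proof (rule ccontr)
      assume "u \<notin> {rho}"
      then have ru: "(rho, u) \<in> A\<^sup>+" using reach[OF LV[OF u]] by (auto simp: rtrancl_eq_or_trancl)
      obtain z where z: "(z,u) \<in> A" using tranclD2[OF ru] by blast
      have "r z \<le> real \<sigma>" by (rule r_le_sigma[OF inV1[OF z]])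
      moreover have "r z > real \<sigma>" using u z unfolding L_iff by blast
      ultimately show False by simp
    qed
  qed
  show "{rho} \<subseteq> L \<sigma>" by (simp add: L_iff rhoV r_le_sigma[OF rhoV] no_par_rho)
qed

lemma cl_rho: "cl rho = X"
proof -
  have "\<And>x. x \<in> X \<Longrightarrow> (rho, \<phi> x) \<in> A\<^sup>*" by (rule reach[OF phiV])
  then show ?thesis unfolding cl_def by blast
qed

lemma top_in: "{X} = cl ` L \<sigma>"
  using L_sigma cl_rho by simp

lemma cl_level_rank: "u \<in> V \<Longrightarrow> cl u \<in> cl ` L j \<Longrightarrow> r u \<le> real j"
proof -
  assume u: "u \<in> V" and "cl u \<in> cl ` L j"
  then obtain w where w: "w \<in> L j" "cl u = cl w" by blast
  then have "u = w" using cl_inj[OF u LV[OF w(1)]] by simp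
  then show ?thesis using w(1) unfolding L_iff by simp
qed

lemma levels_distinct:
  assumes jk: "j < k" and k: "k \<le> \<sigma>" shows "cl ` L j \<noteq> cl ` L k"
proof -
  have "real k \<in> r ` V" using r_range k by auto
  then obtain w where w: "w \<in> V" "r w = real k" by auto
  have "cl w \<in> cl ` L k" using in_own_level[OF w] by blast
  moreover have "cl w \<notin> cl ` L j"
  proof
    assume "cl w \<in> cl ` L j"
    then have "r w \<le> real j" by (rule cl_level_rank[OF w(1)])
    then show False using w(2) jk by simp
  qed
  ultimately show ?thesis by blast
qed

lemma arc_char:
  assumes u: "u \<in> V" and v: "v \<in> V"
  shows "(u,v) \<in> A \<longleftrightarrow> cl v \<subset> cl u \<and> \<not> (\<exists>w\<in>V. cl v \<subset> cl w \<and> cl w \<subset> cl u)"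
proof
  assume a: "(u,v) \<in> A"
  have s: "cl v \<subset> cl u" by (rule cl_strict[OF r_into_trancl[OF a]])
  have "\<not> (\<exists>w\<in>V. cl v \<subset> cl w \<and> cl w \<subset> cl u)"
  proof
    assume "\<exists>w\<in>V. cl v \<subset> cl w \<and> cl w \<subset> cl u"
    then obtain w where w: "w \<in> V" "cl v \<subset> cl w" "cl w \<subset> cl u" by blast
    obtain x where x: "x \<in> cl v" using cl_ne[OF v] by blast
    have vx: "(v, \<phi> x) \<in> A\<^sup>*" and wx: "(w, \<phi> x) \<in> A\<^sup>*" using x w(2) unfolding cl_def by auto
    have "(w,v) \<in> A\<^sup>* \<or> (v,w) \<in> A\<^sup>*" by (rule comp[OF wx vx])
    then show False
    proof
      assume "(w,v) \<in> A\<^sup>*"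
      moreover have "w \<noteq> v" using w(2) by auto
      ultimately have wv: "(w,v) \<in> A\<^sup>+" by (auto simp: rtrancl_eq_or_trancl)
      obtain z where z: "(w,z) \<in> A\<^sup>*" "(z,v) \<in> A" using tranclD2[OF wv] by blast
      have "z = u" by (rule upar[OF z(2) a])
      then have "cl u \<subseteq> cl w" using cl_sub[OF z(1)] by simp
      then show False using w(3) by blast
    next
      assume "(v,w) \<in> A\<^sup>*"
      then have "cl w \<subseteq> cl v" by (rule cl_sub)
      then show False using w(2) by blast
    qed
  qed
  then show "cl v \<subset> cl u \<and> \<not> (\<exists>w\<in>V. cl v \<subset> cl w \<and> cl w \<subset> cl u)" using s by blast
next
  assume h: "cl v \<subset> cl u \<and> \<not> (\<exists>w\<in>V. cl v \<subset> cl w \<and> cl w \<subset> cl u)"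
  obtain x where x: "x \<in> cl v" using cl_ne[OF v] by blast
  have vx: "(v, \<phi> x) \<in> A\<^sup>*" and ux: "(u, \<phi> x) \<in> A\<^sup>*" using x h unfolding cl_def by auto
  have "(u,v) \<in> A\<^sup>* \<or> (v,u) \<in> A\<^sup>*" by (rule comp[OF ux vx])
  moreover have "(v,u) \<notin> A\<^sup>*"
  proof
    assume "(v,u) \<in> A\<^sup>*"
    then have "cl u \<subseteq> cl v" by (rule cl_sub)
    then show False using h by blast
  qed
  ultimately have "(u,v) \<in> A\<^sup>*" by blast
  moreover have "u \<noteq> v" using h by blast
  ultimately have uv: "(u,v) \<in> A\<^sup>+" by (auto simp: rtrancl_eq_or_trancl)
  obtain z where z: "(u,z) \<in> A\<^sup>*" "(z,v) \<in> A" using tranclD2[OF uv] by blast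
  show "(u,v) \<in> A"
  proof (cases "z = u")
    case True then show ?thesis using z by simp
  next
    case False
    then have uz: "(u,z) \<in> A\<^sup>+" using z(1) by (auto simp: rtrancl_eq_or_trancl)
    have "cl z \<subset> cl u" by (rule cl_strict[OF uz])
    moreover have "cl v \<subset> cl z" by (rule cl_strict[OF r_into_trancl[OF z(2)]])
    moreover have "z \<in> V" by (rule inV1[OF z(2)])
    ultimately show ?thesis using h by blast
  qed
qed

lemma cl_phi_min:
  assumes x: "x \<in> X"
  shows "x \<in> cl (\<phi> x)" and "\<And>w. w \<in> V \<Longrightarrow> x \<in> cl w \<Longrightarrow> cl (\<phi> x) \<subseteq> cl w"
proof -
  show "x \<in> cl (\<phi> x)" using x unfolding cl_def by simp
next
  fix w assume "w \<in> V" "x \<in> cl w"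
  then have "(w, \<phi> x) \<in> A\<^sup>*" unfolding cl_def by simp
  then show "cl (\<phi> x) \<subseteq> cl w" by (rule cl_sub)
qed

end


lemma part_ne: "partition_on X P \<Longrightarrow> B \<in> P \<Longrightarrow> B \<noteq> {}"
  unfolding partition_on_def by blast

lemma part_sub: "partition_on X P \<Longrightarrow> B \<in> P \<Longrightarrow> B \<subseteq> X"
  unfolding partition_on_def by blast

lemma part_disj: "partition_on X P \<Longrightarrow> B \<in> P \<Longrightarrow> B' \<in> P \<Longrightarrow> x \<in> B \<Longrightarrow> x \<in> B' \<Longrightarrow> B = B'"
  unfolding partition_on_def pairwise_def disjnt_def by blast

lemma part_cover: "partition_on X P \<Longrightarrow> x \<in> X \<Longrightarrow> \<exists>B\<in>P. x \<in> B"
  unfolding partition_on_def by blast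

lemma refines_refl: "refines P P" unfolding refines_def by blast

lemma refines_trans: "refines P Q \<Longrightarrow> refines Q R \<Longrightarrow> refines P R"
  unfolding refines_def
proof
  fix B assume pq: "\<forall>B\<in>P. \<exists>B'\<in>Q. B \<subseteq> B'" and qr: "\<forall>B\<in>Q. \<exists>B'\<in>R. B \<subseteq> B'" and B: "B \<in> P"
  obtain D where D: "D \<in> Q" "B \<subseteq> D" using pq B by blast
  obtain E where E: "E \<in> R" "D \<subseteq> E" using qr D(1) by blast
  show "\<exists>B'\<in>R. B \<subseteq> B'" using D(2) E by blast
qed

lemma refines_antisym:
  assumes p: "partition_on X P" and q: "partition_on X Q" and pq: "refines P Q" and qp: "refines Q P"
  shows "P = Q"
proof -
  have "P \<subseteq> Q" if p: "partition_on X P" and q: "partition_on X Q" and pq: "refines P Q"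
      and qp: "refines Q P" for P Q
  proof
    fix B assume B: "B \<in> P"
    obtain D where D: "D \<in> Q" "B \<subseteq> D" using pq B unfolding refines_def by blast
    obtain B' where B': "B' \<in> P" "D \<subseteq> B'" using qp D(1) unfolding refines_def by blast
    obtain x where x: "x \<in> B" using part_ne[OF p B] by blast
    have "B = B'" using part_disj[OF p B B'(1) x] x D(2) B'(2) by blast
    then have "B = D" using D(2) B'(2) by blast
    then show "B \<in> Q" using D(1) by simp
  qed
  then show ?thesis using assms by blast
qed

definition idx :: "'x set set set \<Rightarrow> 'x set set \<Rightarrow> nat" where
  "idx C P = card {Q\<in>C. refines Q P \<and> Q \<noteq> P}"

definition rankC :: "'x set set set \<Rightarrow> 'x set \<Rightarrow> nat" where
  "rankC C B = Min {idx C P | P. P \<in> C \<and> B \<in> P}"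

locale chainC =
  fixes X :: "'x set" and C :: "'x set set set"
  assumes C: "C \<in> chains_with_top X" and finX: "finite X"
begin

lemma Cpart: "P \<in> C \<Longrightarrow> partition_on X P"
  using C unfolding chains_with_top_def partitions_def by blast

lemma Ctop: "{X} \<in> C"
  using C unfolding chains_with_top_def by blast

lemma Ccomp: "P \<in> C \<Longrightarrow> Q \<in> C \<Longrightarrow> refines P Q \<or> refines Q P"
  using C unfolding chains_with_top_def by blast

lemma finC: "finite C"
proof -
  have "C \<subseteq> Pow (Pow X)"
  proof
    fix P assume "P \<in> C"
    then have p: "partition_on X P" by (rule Cpart)
    have "\<And>B. B \<in> P \<Longrightarrow> B \<subseteq> X" by (rule part_sub[OF p])
    then show "P \<in> Pow (Pow X)" by blast
  qed
  moreover have "finite (Pow (Pow X))" using finX by simp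
  ultimately show ?thesis by (rule finite_subset)
qed

lemma idx_less: "P \<in> C \<Longrightarrow> idx C P < card C"
proof -
  assume P: "P \<in> C"
  have "{Q\<in>C. refines Q P \<and> Q \<noteq> P} \<subset> C" using P by blast
  then show ?thesis unfolding idx_def by (rule psubset_card_mono[OF finC])
qed

lemma idx_strict:
  assumes P: "P \<in> C" and Q: "Q \<in> C" and pq: "refines P Q" and ne: "P \<noteq> Q"
  shows "idx C P < idx C Q"
proof -
  have sub: "{R\<in>C. refines R P \<and> R \<noteq> P} \<subseteq> {R\<in>C. refines R Q \<and> R \<noteq> Q}"
  proof
    fix R assume R: "R \<in> {R\<in>C. refines R P \<and> R \<noteq> P}"
    then have "refines R Q" using refines_trans[OF _ pq] by blast
    moreover have "R \<noteq> Q"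
    proof
      assume "R = Q"
      then have "refines Q P" using R by simp
      then show False using refines_antisym[OF Cpart[OF P] Cpart[OF Q] pq] ne by simp
    qed
    ultimately show "R \<in> {R\<in>C. refines R Q \<and> R \<noteq> Q}" using R by blast
  qed
  have "P \<in> {R\<in>C. refines R Q \<and> R \<noteq> Q}" using P pq ne by blast
  moreover have "P \<notin> {R\<in>C. refines R P \<and> R \<noteq> P}" by blast
  ultimately have "{R\<in>C. refines R P \<and> R \<noteq> P} \<subset> {R\<in>C. refines R Q \<and> R \<noteq> Q}" using sub by blast
  moreover have "finite {R\<in>C. refines R Q \<and> R \<noteq> Q}" using finC by simp
  ultimately show ?thesis unfolding idx_def by (simp add: psubset_card_mono)
qed

lemma idx_le_refines: "P \<in> C \<Longrightarrow> Q \<in> C \<Longrightarrow> idx C P \<le> idx C Q \<Longrightarrow> refines P Q"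
proof (rule ccontr)
  assume P: "P \<in> C" and Q: "Q \<in> C" and le: "idx C P \<le> idx C Q" and n: "\<not> refines P Q"
  then have qp: "refines Q P" using Ccomp by blast
  have "Q \<noteq> P" using n refines_refl by blast
  then have "idx C Q < idx C P" using idx_strict[OF Q P qp] by simp
  then show False using le by simp
qed

lemma idx_inj: "inj_on (idx C) C"
proof (rule inj_onI)
  fix P Q assume P: "P \<in> C" and Q: "Q \<in> C" and e: "idx C P = idx C Q"
  have "refines P Q" "refines Q P" using idx_le_refines P Q e by simp_all
  then show "P = Q" by (rule refines_antisym[OF Cpart[OF P] Cpart[OF Q]])
qed

lemma idx_bij: "bij_betw (idx C) C {..<card C}"
proof -
  have "idx C ` C \<subseteq> {..<card C}" using idx_less by blast
  moreover have "card (idx C ` C) = card C" using card_image[OF idx_inj] .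
  ultimately have "idx C ` C = {..<card C}"
    by (simp add: card_subset_eq)
  then show ?thesis using idx_inj unfolding bij_betw_def by simp
qed

end


context rtree begin

definition CT where "CT = {cl ` L i | i. i \<le> \<sigma>}"

lemma chain_eq: "partition_chain_of X (V, A, \<phi>, r) = CT"
  unfolding partition_chain_of_def CT_def \<sigma>_def by (simp add: Pcoll_eq)

lemma CT_chain: "CT \<in> chains_with_top X"
  unfolding chains_with_top_def partitions_def
proof (intro CollectI conjI ballI)
  show "CT \<subseteq> {P. partition_on X P}" unfolding CT_def using partition_L by blast
  show "{X} \<in> CT" unfolding CT_def using top_in by blast
next
  fix P Q assume "P \<in> CT" "Q \<in> CT"
  then obtain i j where "P = cl ` L i" "Q = cl ` L j" unfolding CT_def by blast
  then show "refines P Q \<or> refines Q P" using refines_L nat_le_linear by metis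
qed

lemma idx_T:
  assumes k: "k \<le> \<sigma>" shows "idx CT (cl ` L k) = k"
proof -
  have e: "{Q\<in>CT. refines Q (cl ` L k) \<and> Q \<noteq> cl ` L k} = (\<lambda>j. cl ` L j) ` {..<k}"
  proof
    show "{Q\<in>CT. refines Q (cl ` L k) \<and> Q \<noteq> cl ` L k} \<subseteq> (\<lambda>j. cl ` L j) ` {..<k}"
    proof
      fix Q assume Q: "Q \<in> {Q\<in>CT. refines Q (cl ` L k) \<and> Q \<noteq> cl ` L k}"
      then obtain j where j: "j \<le> \<sigma>" "Q = cl ` L j" unfolding CT_def by blast
      have "j < k"
      proof (rule ccontr)
        assume "\<not> j < k"
        then have "k \<le> j" by simp
        then have "refines (cl ` L k) Q" using refines_L j(2) by simp
        then have "Q = cl ` L k" using refines_antisym[OF partition_L partition_L] Q j(2) by blast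
        then show False using Q by blast
      qed
      then show "Q \<in> (\<lambda>j. cl ` L j) ` {..<k}" using j(2) by blast
    qed
  next
    show "(\<lambda>j. cl ` L j) ` {..<k} \<subseteq> {Q\<in>CT. refines Q (cl ` L k) \<and> Q \<noteq> cl ` L k}"
    proof
      fix Q assume "Q \<in> (\<lambda>j. cl ` L j) ` {..<k}"
      then obtain j where j: "j < k" "Q = cl ` L j" by blast
      have "Q \<in> CT" unfolding CT_def using j k by auto
      moreover have "refines Q (cl ` L k)" using refines_L j by simp
      moreover have "Q \<noteq> cl ` L k" using levels_distinct[OF j(1) k] j(2) by simp
      ultimately show "Q \<in> {Q\<in>CT. refines Q (cl ` L k) \<and> Q \<noteq> cl ` L k}" by blast
    qed
  qed
  have "inj_on (\<lambda>j. cl ` L j) {..<k}"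
  proof (rule inj_onI)
    fix i j assume i: "i \<in> {..<k}" and j: "j \<in> {..<k}" and e: "cl ` L i = cl ` L j"
    show "i = j"
    proof (rule ccontr)
      assume "i \<noteq> j"
      then have "i < j \<or> j < i" by arith
      then show False
        using levels_distinct e i j k by (metis lessThan_iff less_imp_le_nat order.strict_trans2)
    qed
  qed
  then show ?thesis unfolding idx_def e by (simp add: card_image)
qed

lemma finCT: "finite CT"
proof -
  have "CT = (\<lambda>i. cl ` L i) ` {..\<sigma>}" unfolding CT_def by auto
  then show ?thesis by simp
qed

lemma rank_T:
  assumes u: "u \<in> V" shows "r u = real (rankC CT (cl u))"
proof -
  obtain k0 where k0: "k0 \<le> \<sigma>" "r u = real k0" using r_nat[OF u] by blast
  define S where "S = {idx CT P | P. P \<in> CT \<and> cl u \<in> P}"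
  have fS: "finite S" unfolding S_def using finCT by simp
  have "cl u \<in> cl ` L k0" using in_own_level[OF u k0(2)] by blast
  moreover have "cl ` L k0 \<in> CT" unfolding CT_def using k0(1) by blast
  ultimately have "k0 = idx CT (cl ` L k0) \<and> cl ` L k0 \<in> CT \<and> cl u \<in> cl ` L k0"
    using idx_T[OF k0(1)] by simp
  then have k0S: "k0 \<in> S" unfolding S_def by blast
  have "\<forall>y\<in>S. k0 \<le> y"
  proof
    fix y assume "y \<in> S"
    then obtain P where P: "y = idx CT P" "P \<in> CT" "cl u \<in> P" unfolding S_def by blast
    then obtain j where j: "j \<le> \<sigma>" "P = cl ` L j" unfolding CT_def by blast
    have "r u \<le> real j" using cl_level_rank[OF u] P(3) j(2) by simp
    then show "k0 \<le> y" using P(1) j idx_T k0(2) by simp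
  qed
  then have "Min S = k0" using fS k0S by (simp add: Min_eqI)
  then show ?thesis unfolding rankC_def S_def[symmetric] using k0(2) by simp
qed

lemma F_T: "cl ` V = \<Union> CT"
proof
  show "cl ` V \<subseteq> \<Union> CT"
  proof
    fix B assume "B \<in> cl ` V"
    then obtain u where u: "u \<in> V" "B = cl u" by blast
    obtain k where k: "k \<le> \<sigma>" "r u = real k" using r_nat[OF u(1)] by blast
    have "B \<in> cl ` L k" using in_own_level[OF u(1) k(2)] u(2) by blast
    then show "B \<in> \<Union> CT" unfolding CT_def using k(1) by blast
  qed
  show "\<Union> CT \<subseteq> cl ` V" unfolding CT_def using LV by blast
qed

end


lemma (in rtree) cl_bij: "bij_betw cl V (\<Union> CT)"
  unfolding bij_betw_def using cl_inj F_T by (auto intro: inj_onI)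

lemma (in rtree) arc_char2:
  assumes u: "u \<in> V" and v: "v \<in> V"
  shows "(u,v) \<in> A \<longleftrightarrow> cl v \<subset> cl u \<and> \<not> (\<exists>B\<in>\<Union> CT. cl v \<subset> B \<and> B \<subset> cl u)"
proof -
  have "(\<exists>w\<in>V. cl v \<subset> cl w \<and> cl w \<subset> cl u) \<longleftrightarrow> (\<exists>B\<in>cl ` V. cl v \<subset> B \<and> B \<subset> cl u)" by blast
  then show ?thesis using arc_char[OF u v] F_T by simp
qed

lemma (in rtree) cl_phi_in: "x \<in> X \<Longrightarrow> cl (\<phi> x) \<in> \<Union> CT"
  using F_T phiV by blast

lemma (in rtree) cl_phi_min2: "x \<in> X \<Longrightarrow> B \<in> \<Union> CT \<Longrightarrow> x \<in> B \<Longrightarrow> cl (\<phi> x) \<subseteq> B"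
proof -
  assume x: "x \<in> X" and B: "B \<in> \<Union> CT" and xB: "x \<in> B"
  obtain w where w: "w \<in> V" "B = cl w" using B F_T by (metis imageE)
  show ?thesis using cl_phi_min(2)[OF x w(1)] xB w(2) by simp
qed

lemma iso_of_eq:
  assumes T1: "rtree X V1 A1 \<phi>1 r1" and T2: "rtree X V2 A2 \<phi>2 r2"
    and e: "rtree.CT X V1 A1 \<phi>1 r1 = rtree.CT X V2 A2 \<phi>2 r2"
  shows "ranked_iso X (V1, A1, \<phi>1, r1) (V2, A2, \<phi>2, r2)"
proof -
  interpret t1: rtree X V1 A1 \<phi>1 r1 by (rule T1)
  interpret t2: rtree X V2 A2 \<phi>2 r2 by (rule T2)
  define F where "F = \<Union> t1.CT"
  have F2: "F = \<Union> t2.CT" unfolding F_def e ..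
  have b1: "bij_betw t1.cl V1 F" using t1.cl_bij unfolding F_def .
  have b2: "bij_betw t2.cl V2 F" using t2.cl_bij unfolding F2 .
  define f where "f = inv_into V2 t2.cl \<circ> t1.cl"
  have bf: "bij_betw f V1 V2" unfolding f_def
    by (rule bij_betw_trans[OF b1 bij_betw_inv_into[OF b2]])
  have key: "f u \<in> V2 \<and> t2.cl (f u) = t1.cl u" if u: "u \<in> V1" for u
  proof -
    have "t1.cl u \<in> t2.cl ` V2" using b1 b2 u unfolding bij_betw_def by blast
    then show ?thesis unfolding f_def by (simp add: f_inv_into_f inv_into_into)
  qed
  show ?thesis
    unfolding ranked_iso_def
  proof (simp only: prod.case, intro exI[of _ f] conjI ballI)
    show "bij_betw f V1 V2" by (rule bf)
  next
    fix u v assume u: "u \<in> V1" and v: "v \<in> V1"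
    have "(u,v) \<in> A1 \<longleftrightarrow> t1.cl v \<subset> t1.cl u \<and> \<not> (\<exists>B\<in>F. t1.cl v \<subset> B \<and> B \<subset> t1.cl u)"
      using t1.arc_char2[OF u v] unfolding F_def .
    also have "\<dots> \<longleftrightarrow> t2.cl (f v) \<subset> t2.cl (f u) \<and> \<not> (\<exists>B\<in>F. t2.cl (f v) \<subset> B \<and> B \<subset> t2.cl (f u))"
      using key[OF u] key[OF v] by simp
    also have "\<dots> \<longleftrightarrow> (f u, f v) \<in> A2"
      using t2.arc_char2[OF conjunct1[OF key[OF u]] conjunct1[OF key[OF v]]] unfolding F2 by simp
    finally show "(u,v) \<in> A1 \<longleftrightarrow> (f u, f v) \<in> A2" .
  next
    fix x assume x: "x \<in> X"
    have p1: "\<phi>1 x \<in> V1" by (rule t1.phiV[OF x])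
    have p2: "\<phi>2 x \<in> V2" by (rule t2.phiV[OF x])
    have "t1.cl (\<phi>1 x) \<subseteq> t2.cl (\<phi>2 x)"
      using t1.cl_phi_min2[OF x] t2.cl_phi_in[OF x] t2.cl_phi_min(1)[OF x] unfolding F_def[symmetric] F2[symmetric]
      by blast
    moreover have "t2.cl (\<phi>2 x) \<subseteq> t1.cl (\<phi>1 x)"
      using t2.cl_phi_min2[OF x] t1.cl_phi_in[OF x] t1.cl_phi_min(1)[OF x] unfolding F_def[symmetric] F2[symmetric]
      by blast
    ultimately have "t2.cl (f (\<phi>1 x)) = t2.cl (\<phi>2 x)" using key[OF p1] by simp
    then show "f (\<phi>1 x) = \<phi>2 x" using t2.cl_inj[OF conjunct1[OF key[OF p1]] p2] by simp
  next
    fix v assume v: "v \<in> V1"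
    have "r1 v = real (rankC t1.CT (t1.cl v))" by (rule t1.rank_T[OF v])
    also have "\<dots> = real (rankC t2.CT (t2.cl (f v)))" using key[OF v] e by simp
    also have "\<dots> = r2 (f v)" using t2.rank_T[OF conjunct1[OF key[OF v]]] by simp
    finally show "r1 v = r2 (f v)" .
  qed
qed



lemma eq_of_iso:
  assumes T1: "rtree X V1 A1 \<phi>1 r1" and T2: "rtree X V2 A2 \<phi>2 r2"
    and iso: "ranked_iso X (V1, A1, \<phi>1, r1) (V2, A2, \<phi>2, r2)"
  shows "rtree.CT X V1 A1 \<phi>1 r1 = rtree.CT X V2 A2 \<phi>2 r2"
proof -
  interpret t1: rtree X V1 A1 \<phi>1 r1 by (rule T1)
  interpret t2: rtree X V2 A2 \<phi>2 r2 by (rule T2)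
  obtain f where bf: "bij_betw f V1 V2" and arc: "\<And>u v. u \<in> V1 \<Longrightarrow> v \<in> V1 \<Longrightarrow> (u, v) \<in> A1 \<longleftrightarrow> (f u, f v) \<in> A2"
    and lab: "\<And>x. x \<in> X \<Longrightarrow> f (\<phi>1 x) = \<phi>2 x" and rk: "\<And>v. v \<in> V1 \<Longrightarrow> r1 v = r2 (f v)"
    using iso unfolding ranked_iso_def by auto
  have fV: "u \<in> V1 \<Longrightarrow> f u \<in> V2" for u using bf unfolding bij_betw_def by blast
  have surj: "y \<in> V2 \<Longrightarrow> \<exists>u\<in>V1. y = f u" for y using bf unfolding bij_betw_def by blast
  have rt1: "(f a, f b) \<in> A2\<^sup>*" if "(a,b) \<in> A1\<^sup>*" for a b
    using that
  proof (induction rule: rtrancl_induct)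
    case base then show ?case by simp
  next
    case (step b c)
    have "(f b, f c) \<in> A2" using arc[OF t1.inV1[OF step(2)] t1.inV2[OF step(2)]] step(2) by simp
    then show ?case using step(3) by simp
  qed
  have rt2: "\<forall>c\<in>V1. y = f c \<longrightarrow> (a,c) \<in> A1\<^sup>*" if "(f a, y) \<in> A2\<^sup>*" and a: "a \<in> V1" for a y
    using that(1)
  proof (induction rule: rtrancl_induct)
    case base
    show ?case
    proof (intro ballI impI)
      fix c assume c: "c \<in> V1" "f a = f c"
      then have "a = c" using bf a unfolding bij_betw_def inj_on_def by blast
      then show "(a,c) \<in> A1\<^sup>*" by simp
    qed
  next
    case (step y z)
    show ?case
    proof (intro ballI impI)
      fix c assume c: "c \<in> V1" "z = f c"
      obtain b where b: "b \<in> V1" "y = f b" using surj[OF t2.inV1[OF step(2)]] by blast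
      have "(f b, f c) \<in> A2" using step(2) b c by simp
      then have "(b,c) \<in> A1" using arc[OF b(1) c(1)] by simp
      moreover have "(a,b) \<in> A1\<^sup>*" using step(3) b by blast
      ultimately show "(a,c) \<in> A1\<^sup>*" by simp
    qed
  qed
  have cleq: "t2.cl (f u) = t1.cl u" if u: "u \<in> V1" for u
  proof -
    have "(f u, \<phi>2 x) \<in> A2\<^sup>* \<longleftrightarrow> (u, \<phi>1 x) \<in> A1\<^sup>*" if x: "x \<in> X" for x
    proof
      assume "(f u, \<phi>2 x) \<in> A2\<^sup>*"
      then have "(f u, f (\<phi>1 x)) \<in> A2\<^sup>*" using lab[OF x] by simp
      then show "(u, \<phi>1 x) \<in> A1\<^sup>*" using rt2[OF _ u] t1.phiV[OF x] by blast
    next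
      assume "(u, \<phi>1 x) \<in> A1\<^sup>*"
      then have "(f u, f (\<phi>1 x)) \<in> A2\<^sup>*" by (rule rt1)
      then show "(f u, \<phi>2 x) \<in> A2\<^sup>*" using lab[OF x] by simp
    qed
    then show ?thesis unfolding t1.cl_def t2.cl_def by blast
  qed
  have sig: "t2.\<sigma> = t1.\<sigma>"
  proof -
    have "r2 ` V2 = r2 ` f ` V1" using bf unfolding bij_betw_def by simp
    also have "\<dots> = r1 ` V1" using rk by (auto simp: image_iff)
    finally show ?thesis unfolding t1.\<sigma>_def t2.\<sigma>_def ts_size_def by simp
  qed
  have Leq: "t2.L k = f ` t1.L k" for k
  proof
    show "f ` t1.L k \<subseteq> t2.L k"
    proof
      fix y assume "y \<in> f ` t1.L k"
      then obtain u where u: "u \<in> t1.L k" "y = f u" by blast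
      have uV: "u \<in> V1" by (rule t1.LV[OF u(1)])
      have "\<forall>p. (p, f u) \<in> A2 \<longrightarrow> r2 p > real k"
      proof (intro allI impI)
        fix p assume p: "(p, f u) \<in> A2"
        obtain q where q: "q \<in> V1" "p = f q" using surj[OF t2.inV1[OF p]] by blast
        have "(q,u) \<in> A1" using arc[OF q(1) uV] p q(2) by simp
        then have "r1 q > real k" using u(1) unfolding t1.L_iff by blast
        then show "r2 p > real k" using rk[OF q(1)] q(2) by simp
      qed
      moreover have "r2 (f u) \<le> real k" using u(1) rk[OF uV] unfolding t1.L_iff by simp
      ultimately show "y \<in> t2.L k" unfolding t2.L_iff using fV[OF uV] u(2) by simp
    qed
  next
    show "t2.L k \<subseteq> f ` t1.L k"
    proof
      fix y assume y: "y \<in> t2.L k"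
      obtain u where u: "u \<in> V1" "y = f u" using surj[OF t2.LV[OF y]] by blast
      have "\<forall>p. (p, u) \<in> A1 \<longrightarrow> r1 p > real k"
      proof (intro allI impI)
        fix p assume p: "(p, u) \<in> A1"
        have pV: "p \<in> V1" by (rule t1.inV1[OF p])
        have "(f p, f u) \<in> A2" using arc[OF pV u(1)] p by simp
        then have "r2 (f p) > real k" using y u(2) unfolding t2.L_iff by blast
        then show "r1 p > real k" using rk[OF pV] by simp
      qed
      moreover have "r1 u \<le> real k" using y u rk[OF u(1)] unfolding t2.L_iff by simp
      ultimately have "u \<in> t1.L k" unfolding t1.L_iff using u(1) by simp
      then show "y \<in> f ` t1.L k" using u(2) by blast
    qed
  qed
  have "t2.cl ` t2.L k = t1.cl ` t1.L k" for k
  proof -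
    have "t2.cl ` t2.L k = (t2.cl \<circ> f) ` t1.L k" unfolding Leq by (simp add: image_comp)
    also have "\<dots> = t1.cl ` t1.L k" using cleq t1.LV by (auto simp: image_iff)
    finally show ?thesis .
  qed
  then show ?thesis unfolding t1.CT_def t2.CT_def sig by simp
qed



context chainC begin

definition Pk where "Pk k = inv_into C (idx C) k"

lemma Pk_in: "k < card C \<Longrightarrow> Pk k \<in> C \<and> idx C (Pk k) = k"
proof -
  assume k: "k < card C"
  then have "k \<in> idx C ` C" using idx_bij unfolding bij_betw_def by simp
  then show ?thesis unfolding Pk_def by (simp add: inv_into_into f_inv_into_f)
qed

lemma Pk_idx: "P \<in> C \<Longrightarrow> Pk (idx C P) = P"
  unfolding Pk_def using idx_inj by (simp add: inv_into_f_f)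

definition F where "F = \<Union> C"

lemma F_ne: "B \<in> F \<Longrightarrow> B \<noteq> {}"
proof -
  assume "B \<in> F"
  then obtain P where "P \<in> C" "B \<in> P" unfolding F_def by blast
  then show ?thesis using part_ne[OF Cpart] by blast
qed
lemma F_sub: "B \<in> F \<Longrightarrow> B \<subseteq> X"
proof -
  assume "B \<in> F"
  then obtain P where "P \<in> C" "B \<in> P" unfolding F_def by blast
  then show ?thesis using part_sub[OF Cpart] by blast
qed
lemma X_F: "X \<in> F" unfolding F_def using Ctop by blast
lemma finF: "finite F"
proof -
  have "F \<subseteq> Pow X" using F_sub by blast
  then show ?thesis using finX by (simp add: finite_subset)
qed

lemma laminar:
  assumes B: "B \<in> F" and D: "D \<in> F" and x: "x \<in> B" "x \<in> D"
  shows "B \<subseteq> D \<or> D \<subseteq> B"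
proof -
  obtain P where P: "P \<in> C" "B \<in> P" using B unfolding F_def by blast
  obtain Q where Q: "Q \<in> C" "D \<in> Q" using D unfolding F_def by blast
  have "refines P Q \<or> refines Q P" by (rule Ccomp[OF P(1) Q(1)])
  then show ?thesis
  proof
    assume "refines P Q"
    then obtain D' where D': "D' \<in> Q" "B \<subseteq> D'" using P(2) unfolding refines_def by blast
    have "D' = D" using part_disj[OF Cpart[OF Q(1)] D'(1) Q(2)] x D'(2) by blast
    then show ?thesis using D' by simp
  next
    assume "refines Q P"
    then obtain B' where B': "B' \<in> P" "D \<subseteq> B'" using Q(2) unfolding refines_def by blast
    have "B' = B" using part_disj[OF Cpart[OF P(1)] B'(1) P(2)] x B'(2) by blast
    then show ?thesis using B' by simp
  qed
qed

definition S_of where "S_of B = {idx C P | P. P \<in> C \<and> B \<in> P}"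

lemma S_of_fin: "finite (S_of B)"
  unfolding S_of_def using finC by simp

lemma S_of_ne: "B \<in> F \<Longrightarrow> S_of B \<noteq> {}"
  unfolding S_of_def F_def by blast

lemma rank_attained: "B \<in> F \<Longrightarrow> B \<in> Pk (rankC C B)"
proof -
  assume B: "B \<in> F"
  have "Min (S_of B) \<in> S_of B" by (rule Min_in[OF S_of_fin S_of_ne[OF B]])
  then obtain P where P: "Min (S_of B) = idx C P" "P \<in> C" "B \<in> P" unfolding S_of_def by blast
  then show ?thesis unfolding rankC_def S_of_def[symmetric] using Pk_idx by simp
qed

lemma rank_less: "B \<in> F \<Longrightarrow> rankC C B < card C"
proof -
  assume B: "B \<in> F"
  have "Min (S_of B) \<in> S_of B" by (rule Min_in[OF S_of_fin S_of_ne[OF B]])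
  then obtain P where P: "Min (S_of B) = idx C P" "P \<in> C" unfolding S_of_def by blast
  then show ?thesis unfolding rankC_def S_of_def[symmetric] using idx_less by simp
qed

lemma rank_le_iff:
  assumes B: "B \<in> F" and k: "k < card C"
  shows "rankC C B \<le> k \<longleftrightarrow> (\<exists>D\<in>Pk k. B \<subseteq> D)"
proof
  assume le: "rankC C B \<le> k"
  define P0 where "P0 = Pk (rankC C B)"
  have P0: "P0 \<in> C" "idx C P0 = rankC C B" using Pk_in rank_less[OF B] unfolding P0_def by blast+
  have BP0: "B \<in> P0" using rank_attained[OF B] unfolding P0_def .
  have "refines P0 (Pk k)" using idx_le_refines[OF P0(1) conjunct1[OF Pk_in[OF k]]] P0(2) le Pk_in[OF k] by simp
  then show "\<exists>D\<in>Pk k. B \<subseteq> D" using BP0 unfolding refines_def by blast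
next
  assume "\<exists>D\<in>Pk k. B \<subseteq> D"
  then obtain D where D: "D \<in> Pk k" "B \<subseteq> D" by blast
  obtain P' where P': "P' \<in> C" "B \<in> P'" using B unfolding F_def by blast
  have PkC: "Pk k \<in> C" and ik: "idx C (Pk k) = k" using Pk_in[OF k] by simp_all
  have mem: "idx C P \<in> S_of B" if "P \<in> C" "B \<in> P" for P using that unfolding S_of_def by blast
  show "rankC C B \<le> k"
  proof (cases "idx C P' \<le> k")
    case True
    have "rankC C B \<le> idx C P'" unfolding rankC_def S_of_def[symmetric]
      using mem[OF P'] S_of_fin by simp
    then show ?thesis using True by simp
  next
    case False
    then have "idx C (Pk k) \<le> idx C P'" using ik by simp
    then have "refines (Pk k) P'" by (rule idx_le_refines[OF PkC P'(1)])
    then obtain D' where D': "D' \<in> P'" "D \<subseteq> D'" using D(1) unfolding refines_def by blast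
    obtain x where x: "x \<in> B" using F_ne[OF B] by blast
    have "B = D'" using part_disj[OF Cpart[OF P'(1)] P'(2) D'(1) x] x D(2) D'(2) by blast
    then have "B = D" using D(2) D'(2) by simp
    then have "B \<in> Pk k" using D(1) by simp
    then have "rankC C B \<le> idx C (Pk k)" unfolding rankC_def S_of_def[symmetric]
      using mem[OF PkC] S_of_fin by simp
    then show ?thesis using ik by simp
  qed
qed

lemma rank_mono: "B \<in> F \<Longrightarrow> E \<in> F \<Longrightarrow> B \<subseteq> E \<Longrightarrow> rankC C B \<le> rankC C E"
proof -
  assume B: "B \<in> F" and E: "E \<in> F" and BE: "B \<subseteq> E"
  have "E \<in> Pk (rankC C E)" by (rule rank_attained[OF E])
  then have "\<exists>D\<in>Pk (rankC C E). B \<subseteq> D" using BE by blast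
  then show ?thesis using rank_le_iff[OF B rank_less[OF E]] by simp
qed

lemma rank_strict: "B \<in> F \<Longrightarrow> E \<in> F \<Longrightarrow> B \<subset> E \<Longrightarrow> rankC C B < rankC C E"
proof -
  assume B: "B \<in> F" and E: "E \<in> F" and BE: "B \<subset> E"
  have le: "rankC C B \<le> rankC C E" using rank_mono[OF B E] BE by blast
  show ?thesis
  proof (rule ccontr)
    assume "\<not> ?thesis"
    then have eq: "rankC C B = rankC C E" using le by simp
    have "B \<in> Pk (rankC C E)" using rank_attained[OF B] eq by simp
    moreover have "E \<in> Pk (rankC C E)" by (rule rank_attained[OF E])
    moreover have "Pk (rankC C E) \<in> C" using Pk_in[OF rank_less[OF E]] by simp
    moreover obtain x where "x \<in> B" using F_ne[OF B] by blast
    ultimately have "B = E" using part_disj[OF Cpart[OF \<open>Pk (rankC C E) \<in> C\<close>]] BE by blast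
    then show False using BE by simp
  qed
qed

lemma part_subset_eq: "partition_on X P \<Longrightarrow> partition_on X Q \<Longrightarrow> P \<subseteq> Q \<Longrightarrow> P = Q"
proof -
  assume p: "partition_on X P" and q: "partition_on X Q" and s: "P \<subseteq> Q"
  have "Q \<subseteq> P"
  proof
    fix D assume D: "D \<in> Q"
    obtain x where x: "x \<in> D" using part_ne[OF q D] by blast
    have "x \<in> X" using part_sub[OF q D] x by blast
    then obtain B where B: "B \<in> P" "x \<in> B" using part_cover[OF p] by blast
    have "B = D" using part_disj[OF q _ D B(2) x] B(1) s by blast
    then show "D \<in> P" using B by simp
  qed
  then show ?thesis using s by blast
qed

lemma card_C_pos: "card C > 0" using finC Ctop card_gt_0_iff by blast

lemma ranks_onto:
  assumes Xne: "X \<noteq> {}"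
  shows "rankC C ` F = {..<card C}"
proof
  show "rankC C ` F \<subseteq> {..<card C}" using rank_less by blast
  show "{..<card C} \<subseteq> rankC C ` F"
  proof
    fix k assume "k \<in> {..<card C}"
    then have k: "k < card C" by simp
    have PkC: "Pk k \<in> C" using Pk_in[OF k] by simp
    show "k \<in> rankC C ` F"
    proof (cases k)
      case 0
      obtain x where "x \<in> X" using Xne by blast
      then obtain B where B: "B \<in> Pk k" "x \<in> B" using part_cover[OF Cpart[OF PkC]] by blast
      have BF: "B \<in> F" unfolding F_def using B(1) PkC by blast
      have "rankC C B \<le> k" using rank_le_iff[OF BF k] B(1) by blast
      then have "rankC C B = k" using 0 by simp
      then show ?thesis using BF by blast
    next
      case (Suc j)
      have j: "j < card C" using k Suc by simp
      have PjC: "Pk j \<in> C" using Pk_in[OF j] by simp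
      have ref: "refines (Pk j) (Pk k)" using idx_le_refines[OF PjC PkC] Pk_in[OF j] Pk_in[OF k] Suc by simp
      have "Pk j \<noteq> Pk k" using Pk_in[OF j] Pk_in[OF k] Suc by auto
      then have "\<not> Pk k \<subseteq> Pk j"
        using part_subset_eq[OF Cpart[OF PkC] Cpart[OF PjC]] by auto
      then obtain B where B: "B \<in> Pk k" "B \<notin> Pk j" by blast
      have BF: "B \<in> F" unfolding F_def using B(1) PkC by blast
      have le: "rankC C B \<le> k" using rank_le_iff[OF BF k] B(1) by blast
      have "\<not> rankC C B \<le> j"
      proof
        assume "rankC C B \<le> j"
        then obtain D where D: "D \<in> Pk j" "B \<subseteq> D" using rank_le_iff[OF BF j] by blast
        obtain D' where D': "D' \<in> Pk k" "D \<subseteq> D'" using ref D(1) unfolding refines_def by blast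
        obtain x where x: "x \<in> B" using F_ne[OF BF] by blast
        have "B = D'" using part_disj[OF Cpart[OF PkC] B(1) D'(1) x] x D(2) D'(2) by blast
        then have "B = D" using D(2) D'(2) by simp
        then show False using D(1) B(2) by simp
      qed
      then have "rankC C B = k" using le Suc by simp
      then show ?thesis using BF by blast
    qed
  qed
qed

lemma minblock_ex:
  assumes x: "x \<in> X"
  shows "\<exists>m. m \<in> F \<and> x \<in> m \<and> (\<forall>B\<in>F. x \<in> B \<longrightarrow> m \<subseteq> B)"
proof -
  define S where "S = {B\<in>F. x \<in> B}"
  have fS: "finite S" unfolding S_def using finF by simp
  have "X \<in> S" unfolding S_def using X_F x by simp
  then have nS: "S \<noteq> {}" by blast
  obtain m where m: "m \<in> S" "\<forall>b\<in>S. b \<le> m \<longrightarrow> m = b" using finite_has_minimal[OF fS nS] by blast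
  have "\<forall>B\<in>F. x \<in> B \<longrightarrow> m \<subseteq> B"
  proof (intro ballI impI)
    fix B assume B: "B \<in> F" "x \<in> B"
    then have "B \<in> S" unfolding S_def by simp
    have "B \<subseteq> m \<or> m \<subseteq> B" using laminar[OF B(1), of m x] m(1) B(2) unfolding S_def by blast
    then show "m \<subseteq> B" using m(2) \<open>B \<in> S\<close> by blast
  qed
  then show ?thesis using m(1) unfolding S_def by blast
qed

definition psi where "psi x = (SOME m. m \<in> F \<and> x \<in> m \<and> (\<forall>B\<in>F. x \<in> B \<longrightarrow> m \<subseteq> B))"

lemma psi: "x \<in> X \<Longrightarrow> psi x \<in> F \<and> x \<in> psi x \<and> (\<forall>B\<in>F. x \<in> B \<longrightarrow> psi x \<subseteq> B)"
  unfolding psi_def using minblock_ex by (rule someI_ex)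

definition cover where "cover B D \<longleftrightarrow> B \<in> F \<and> D \<in> F \<and> D \<subset> B \<and> \<not> (\<exists>E\<in>F. D \<subset> E \<and> E \<subset> B)"

lemma cover_above:
  assumes D: "D \<in> F" and B: "B \<in> F" and DB: "D \<subset> B"
  shows "\<exists>E. D \<subseteq> E \<and> cover B E"
proof -
  define S where "S = {E\<in>F. D \<subseteq> E \<and> E \<subset> B}"
  have fS: "finite S" unfolding S_def using finF by simp
  have "D \<in> S" unfolding S_def using D DB by simp
  then obtain m where m: "m \<in> S" "\<forall>b\<in>S. m \<le> b \<longrightarrow> m = b"
    using finite_has_maximal[OF fS] by blast
  have "cover B m" unfolding cover_def
  proof (intro conjI)
    show "B \<in> F" "m \<in> F" "m \<subset> B" using B m(1) unfolding S_def by simp_all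
    show "\<not> (\<exists>E\<in>F. m \<subset> E \<and> E \<subset> B)"
    proof
      assume "\<exists>E\<in>F. m \<subset> E \<and> E \<subset> B"
      then obtain E where E: "E \<in> F" "m \<subset> E" "E \<subset> B" by blast
      then have "E \<in> S" using m(1) unfolding S_def by auto
      then show False using m(2) E(2) by blast
    qed
  qed
  then show ?thesis using m(1) unfolding S_def by blast
qed

lemma cover_below:
  assumes D: "D \<in> F" and B: "B \<in> F" and DB: "D \<subset> B"
  shows "\<exists>E. E \<subseteq> B \<and> cover E D"
proof -
  define S where "S = {E\<in>F. D \<subset> E \<and> E \<subseteq> B}"
  have fS: "finite S" unfolding S_def using finF by simp
  have "B \<in> S" unfolding S_def using B DB by simp
  then obtain m where m: "m \<in> S" "\<forall>b\<in>S. b \<le> m \<longrightarrow> m = b"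
    using finite_has_minimal[OF fS] by blast
  have "cover m D" unfolding cover_def
  proof (intro conjI)
    show "m \<in> F" "D \<in> F" "D \<subset> m" using D m(1) unfolding S_def by simp_all
    show "\<not> (\<exists>E\<in>F. D \<subset> E \<and> E \<subset> m)"
    proof
      assume "\<exists>E\<in>F. D \<subset> E \<and> E \<subset> m"
      then obtain E where E: "E \<in> F" "D \<subset> E" "E \<subset> m" by blast
      then have "E \<in> S" using m(1) unfolding S_def by auto
      then show False using m(2) E(3) by blast
    qed
  qed
  then show ?thesis using m(1) unfolding S_def by blast
qed

lemma cover_path:
  "D \<in> F \<Longrightarrow> B \<in> F \<Longrightarrow> D \<subseteq> B \<Longrightarrow> (B, D) \<in> {(B,D). cover B D}\<^sup>*"
proof (induction "card (B - D)" arbitrary: D rule: less_induct)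
  case less
  show ?case
  proof (cases "D = B")
    case True then show ?thesis by simp
  next
    case False
    then have DB: "D \<subset> B" using less.prems by blast
    obtain E where E: "E \<subseteq> B" "cover E D" using cover_below[OF less.prems(1,2) DB] by blast
    have EF: "E \<in> F" and DE: "D \<subset> E" using E(2) unfolding cover_def by simp_all
    have "B - E \<subset> B - D" using DE E(1) by blast
    moreover have "finite (B - D)" using finite_subset[OF F_sub[OF less.prems(2)] finX] by simp
    ultimately have "card (B - E) < card (B - D)" by (simp add: psubset_card_mono)
    then have "(B, E) \<in> {(B,D). cover B D}\<^sup>*" using less.hyps EF less.prems(2) E(1) by blast
    moreover have "(E, D) \<in> {(B,D). cover B D}" using E(2) by simp
    ultimately show ?thesis by (rule rtrancl_into_rtrancl)
  qed
qed

end


lemma SC: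
  fixes V :: "'v set" and A :: "('v \<times> 'v) set" and \<phi> :: "'x \<Rightarrow> 'v" and r :: "'v \<Rightarrow> real"
  assumes finV: "finite V" and AV: "A \<subseteq> V \<times> V" and acyc: "acyclic A"
    and rhoV: "\<rho> \<in> V" and nopar: "\<And>u. (u, \<rho>) \<notin> A" and reach: "\<And>v. v \<in> V \<Longrightarrow> (\<rho>, v) \<in> A\<^sup>*"
    and up: "uparents A" and phiV: "\<And>x. x \<in> X \<Longrightarrow> \<phi> x \<in> V"
    and leaf: "\<And>v. v \<in> V \<Longrightarrow> (\<And>w. (v, w) \<notin> A) \<Longrightarrow> v \<in> \<phi> ` X"
    and branch: "\<And>v c. (v, c) \<in> A \<Longrightarrow> \<exists>c'. (v, c') \<in> A \<and> c' \<noteq> c"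
    and rnn: "\<And>v. v \<in> V \<Longrightarrow> r v \<ge> 0" and rphi: "\<And>x. x \<in> X \<Longrightarrow> r (\<phi> x) = 0"
    and rarc: "\<And>u v. (u, v) \<in> A \<Longrightarrow> r u > r v"
    and rrange: "r ` V = real ` {0..ts_size V r}"
  shows "ranked_tree X V A \<phi> r"
proof -
  have finA: "finite A" using finite_subset[OF AV] finV by simp
  have fin_par: "finite {u. (u,v) \<in> A}" for v
    by (rule finite_subset[of _ "fst ` A"]) (use finA in force)+
  have indeg1: "indeg A v \<le> 1" for v
  proof -
    have "\<forall>a1\<in>{u. (u,v) \<in> A}. \<forall>a2\<in>{u. (u,v) \<in> A}. a1 = a2" using up unfolding uparents_def by blast
    then have "card {u. (u,v) \<in> A} \<le> Suc 0" by (simp only: card_le_Suc0_iff_eq[OF fin_par[of v]])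
    then show ?thesis unfolding indeg_def by simp
  qed
  have noret: "\<not> is_reticulation V A v" for v using indeg1[of v] unfolding is_reticulation_def by simp
  have isroot: "is_root V A \<rho>"
    unfolding is_root_def
  proof (intro conjI ballI)
    show "\<rho> \<in> V" by (rule rhoV)
    show "indeg A \<rho> = 0" unfolding indeg_def using nopar by simp
    fix v assume "v \<in> V"
    then show "\<exists>p. dpath A p \<and> hd p = \<rho> \<and> last p = v" using rt_dpath[OF reach] by blast
  qed
  have noretcyc: "\<not> reticulation_cycle A Cy" for Cy
  proof
    assume "reticulation_cycle A Cy"
    then obtain p1 p2 where p: "p1 \<noteq> p2" "dpath A p1" "dpath A p2" "hd p1 = hd p2" "last p1 = last p2"
      unfolding reticulation_cycle_def by blast
    then show False using dpath_unique[OF up acyc p(2) p(3) p(4) p(5)] by simp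
  qed
  have rd: "rooted_DAG V A" unfolding rooted_DAG_def using finV AV acyc isroot by blast
  have rc: "rooted_cactus X V A \<phi>"
    unfolding rooted_cactus_def
  proof (intro conjI ballI allI impI)
    show "rooted_DAG V A" by (rule rd)
  next
    fix v show "indeg A v \<le> 2" using indeg1[of v] by simp
  next
    fix C1 C2 assume "reticulation_cycle A C1 \<and> reticulation_cycle A C2 \<and> C1 \<noteq> C2"
    then show "cycle_arcs C1 \<inter> cycle_arcs C2 = {}" using noretcyc by blast
  next
    show "\<phi> ` X \<subseteq> V" using phiV by blast
  next
    fix v assume v: "v \<in> V" and l: "is_leaf V A v"
    have fch: "finite {w. (v,w) \<in> A}" by (rule finite_subset[of _ "snd ` A"]) (use finA in force)+
    have "{w. (v,w) \<in> A} = {}" using l fch unfolding is_leaf_def outdeg_def by simp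
    then show "v \<in> \<phi> ` X" using leaf[OF v] by blast
  next
    fix v assume v: "v \<in> V" and t: "is_tree_vertex V A v \<and> outdeg A v = 1"
    then have "card {w. (v,w) \<in> A} = 1" unfolding outdeg_def by simp
    then obtain c where c: "{w. (v,w) \<in> A} = {c}" by (rule card_1_singletonE)
    then have "(v,c) \<in> A" by blast
    then obtain c' where "(v,c') \<in> A" "c' \<noteq> c" using branch by blast
    then show "v \<in> \<phi> ` X" using c by blast
  qed
  have ts: "time_stamp X V A \<phi> r"
    unfolding time_stamp_def
  proof (intro conjI ballI)
    show "\<And>v. v \<in> V \<Longrightarrow> 0 \<le> r v" by (rule rnn)
    show "\<And>x. x \<in> X \<Longrightarrow> r (\<phi> x) = 0" by (rule rphi)
  next
    fix a assume "a \<in> A"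
    then show "case a of (u, v) \<Rightarrow> \<not> is_reticulation V A v \<longrightarrow> r v < r u" using rarc by (cases a) simp
  next
    fix a assume "a \<in> A"
    then show "case a of (p, v) \<Rightarrow> is_reticulation V A v \<longrightarrow> r v = r p" using noret by (cases a) simp
  qed
  show ?thesis unfolding ranked_tree_def rooted_tree_def ranking_def
    using rc noret ts rrange by blast
qed



context chainC begin

lemma construct:
  assumes Xne: "X \<noteq> {}" and inf: "infinite (UNIV :: 'v set)"
  shows "\<exists>T \<in> (ranked_trees X :: ('v set \<times> ('v \<times> 'v) set \<times> ('x \<Rightarrow> 'v) \<times> ('v \<Rightarrow> real)) set).
            partition_chain_of X T = C"
proof -
  obtain V :: "'v set" where V: "finite V" "card V = card F"
    using infinite_arbitrarily_large[OF inf] by blast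
  obtain h where h: "bij_betw h V F" using finite_same_card_bij[OF V(1) finF V(2)] by blast
  define hi where "hi = inv_into V h"
  have hF: "v \<in> V \<Longrightarrow> h v \<in> F" for v using h unfolding bij_betw_def by blast
  have hiV: "B \<in> F \<Longrightarrow> hi B \<in> V" for B using h unfolding hi_def bij_betw_def by (simp add: inv_into_into)
  have hhi: "B \<in> F \<Longrightarrow> h (hi B) = B" for B using h unfolding hi_def bij_betw_def by (simp add: f_inv_into_f)
  have hih: "v \<in> V \<Longrightarrow> hi (h v) = v" for v using h unfolding hi_def bij_betw_def by (simp add: inv_into_f_f)
  define A where "A = {(u,v). u \<in> V \<and> v \<in> V \<and> cover (h u) (h v)}"
  define \<phi> where "\<phi> x = hi (psi x)" for x
  define r where "r v = real (rankC C (h v))" for v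
  have AV: "A \<subseteq> V \<times> V" unfolding A_def by blast
  have Aiff: "(u,v) \<in> A \<longleftrightarrow> u \<in> V \<and> v \<in> V \<and> cover (h u) (h v)" for u v unfolding A_def by simp
  have R1: "(u,w) \<in> A\<^sup>* \<Longrightarrow> u \<in> V \<Longrightarrow> w \<in> V \<and> h w \<subseteq> h u" for u w
  proof (induction rule: rtrancl_induct)
    case base then show ?case by simp
  next
    case (step y z)
    then show ?case using Aiff[of y z] unfolding cover_def by blast
  qed
  have R1s: "(u,w) \<in> A\<^sup>+ \<Longrightarrow> h w \<subset> h u" for u w
  proof (induction rule: trancl_induct)
    case (base y) then show ?case using Aiff[of u y] unfolding cover_def by blast
  next
    case (step y z)
    then show ?case using Aiff[of y z] unfolding cover_def by blast
  qed
  have R2: "(B, D) \<in> {(B,D). cover B D}\<^sup>* \<Longrightarrow> B \<in> F \<Longrightarrow> (hi B, hi D) \<in> A\<^sup>*" for B D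
  proof (induction rule: rtrancl_induct)
    case base then show ?case by simp
  next
    case (step D E)
    have c: "cover D E" using step(2) by simp
    then have DF: "D \<in> F" and EF: "E \<in> F" unfolding cover_def by simp_all
    have "(hi D, hi E) \<in> A" unfolding Aiff using hiV[OF DF] hiV[OF EF] hhi[OF DF] hhi[OF EF] c by simp
    then show ?case using step(3)[OF step(4)] by simp
  qed
  have rt_iff: "u \<in> V \<Longrightarrow> w \<in> V \<Longrightarrow> (u,w) \<in> A\<^sup>* \<longleftrightarrow> h w \<subseteq> h u" for u w
  proof
    assume "u \<in> V" "(u,w) \<in> A\<^sup>*" then show "h w \<subseteq> h u" using R1 by blast
  next
    assume u: "u \<in> V" and w: "w \<in> V" and s: "h w \<subseteq> h u"
    have "(h u, h w) \<in> {(B,D). cover B D}\<^sup>*" by (rule cover_path[OF hF[OF w] hF[OF u] s])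
    then have "(hi (h u), hi (h w)) \<in> A\<^sup>*" using R2 hF[OF u] by blast
    then show "(u,w) \<in> A\<^sup>*" using hih[OF u] hih[OF w] by simp
  qed
  have finA: "finite A" using finite_subset[OF AV] V(1) by simp
  have acyc: "acyclic A" unfolding acyclic_def using R1s by blast
  define \<rho> where "\<rho> = hi X"
  have rhoV: "\<rho> \<in> V" unfolding \<rho>_def by (rule hiV[OF X_F])
  have hrho: "h \<rho> = X" unfolding \<rho>_def by (rule hhi[OF X_F])
  have nopar: "(u, \<rho>) \<notin> A" for u
  proof
    assume "(u, \<rho>) \<in> A"
    then have "X \<subset> h u" "u \<in> V" using hrho unfolding Aiff cover_def by simp_all
    then show False using F_sub[OF hF] by blast
  qed
  have reach: "v \<in> V \<Longrightarrow> (\<rho>, v) \<in> A\<^sup>*" for v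
    using rt_iff[OF rhoV, of v] hrho F_sub[OF hF] by blast
  have up: "uparents A"
    unfolding uparents_def
  proof (intro allI impI)
    fix u u' v assume a: "(u,v) \<in> A" "(u',v) \<in> A"
    have c1: "cover (h u) (h v)" and c2: "cover (h u') (h v)" and V3: "u \<in> V" "u' \<in> V" "v \<in> V"
      using a unfolding Aiff by simp_all
    obtain x where x: "x \<in> h v" using F_ne[OF hF[OF V3(3)]] by blast
    have xu: "x \<in> h u" and xu': "x \<in> h u'" using c1 c2 x unfolding cover_def by blast+
    have "h u \<subseteq> h u' \<or> h u' \<subseteq> h u" by (rule laminar[OF hF[OF V3(1)] hF[OF V3(2)] xu xu'])
    then have "h u = h u'" using c1 c2 unfolding cover_def by blast
    then show "u = u'" using hih V3 by metis
  qed
  have phiV: "x \<in> X \<Longrightarrow> \<phi> x \<in> V" for x unfolding \<phi>_def using hiV psi by blast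
  have hphi: "x \<in> X \<Longrightarrow> h (\<phi> x) = psi x" for x unfolding \<phi>_def using hhi psi by blast
  have leaf: "v \<in> \<phi> ` X" if v: "v \<in> V" and nc: "\<And>w. (v, w) \<notin> A" for v
  proof -
    obtain x where x: "x \<in> h v" using F_ne[OF hF[OF v]] by blast
    have xX: "x \<in> X" using x F_sub[OF hF[OF v]] by blast
    have ps: "psi x \<in> F" "psi x \<subseteq> h v" using psi[OF xX] x hF[OF v] by blast+
    have "psi x = h v"
    proof (rule ccontr)
      assume "psi x \<noteq> h v"
      then have "psi x \<subset> h v" using ps by blast
      then obtain E where E: "psi x \<subseteq> E" "cover (h v) E" using cover_above[OF ps(1) hF[OF v]] by blast
      then have EF: "E \<in> F" unfolding cover_def by simp
      have "(v, hi E) \<in> A" unfolding Aiff using v hiV[OF EF] hhi[OF EF] E(2) by simp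
      then show False using nc by blast
    qed
    then have "\<phi> x = v" unfolding \<phi>_def using hih[OF v] by simp
    then show ?thesis using xX by blast
  qed
  have Cpos: "0 < card C" by (rule card_C_pos)
  have branch: "\<exists>c'. (v, c') \<in> A \<and> c' \<noteq> c" if a: "(v, c) \<in> A" for v c
  proof -
    have vV: "v \<in> V" and cV: "c \<in> V" and cov: "cover (h v) (h c)" using a unfolding Aiff by simp_all
    have hvF: "h v \<in> F" and hcF: "h c \<in> F" using hF vV cV by simp_all
    have sub: "h c \<subset> h v" using cov unfolding cover_def by simp
    have lt: "rankC C (h c) < rankC C (h v)" by (rule rank_strict[OF hcF hvF sub])
    define j where "j = rankC C (h v) - 1"
    have jk: "rankC C (h v) = Suc j" using lt unfolding j_def by simp
    have j: "j < card C" using rank_less[OF hvF] jk by simp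
    obtain y where y: "y \<in> h v" "y \<notin> h c" using sub by blast
    have yX: "y \<in> X" using y F_sub[OF hvF] by blast
    have PjC: "Pk j \<in> C" using Pk_in[OF j] by simp
    obtain D where D: "D \<in> Pk j" "y \<in> D" using part_cover[OF Cpart[OF PjC] yX] by blast
    have DF: "D \<in> F" unfolding F_def using D(1) PjC by blast
    have rD: "rankC C D \<le> j" using rank_le_iff[OF DF j] D(1) by blast
    have "D \<subseteq> h v \<or> h v \<subseteq> D" by (rule laminar[OF DF hvF D(2) y(1)])
    moreover have "\<not> h v \<subseteq> D"
    proof
      assume "h v \<subseteq> D"
      then have "rankC C (h v) \<le> rankC C D" by (rule rank_mono[OF hvF DF])
      then show False using rD jk by simp
    qed
    ultimately have "D \<subseteq> h v" by blast
    moreover have "D \<noteq> h v" using rD jk by auto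
    ultimately have "D \<subset> h v" by blast
    then obtain E where E: "D \<subseteq> E" "cover (h v) E" using cover_above[OF DF hvF] by blast
    then have EF: "E \<in> F" unfolding cover_def by simp
    have "(v, hi E) \<in> A" unfolding Aiff using vV hiV[OF EF] hhi[OF EF] E(2) by simp
    moreover have "hi E \<noteq> c"
    proof
      assume "hi E = c"
      then have "h c = E" using hhi[OF EF] by simp
      then show False using y(2) D(2) E(1) by blast
    qed
    ultimately show ?thesis by blast
  qed
  have rnn: "r v \<ge> 0" for v unfolding r_def by simp
  have rphi: "r (\<phi> x) = 0" if x: "x \<in> X" for x
  proof -
    have P0: "Pk 0 \<in> C" using Pk_in[OF Cpos] by simp
    obtain D where D: "D \<in> Pk 0" "x \<in> D" using part_cover[OF Cpart[OF P0] x] by blast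
    have DF: "D \<in> F" unfolding F_def using D(1) P0 by blast
    have "psi x \<subseteq> D" using psi[OF x] DF D(2) by blast
    then have "rankC C (psi x) \<le> 0" using rank_le_iff[OF conjunct1[OF psi[OF x]] Cpos] D(1) by blast
    then show ?thesis unfolding r_def using hphi[OF x] by simp
  qed
  have rarc: "r u > r v" if a: "(u, v) \<in> A" for u v
  proof -
    have "u \<in> V" "v \<in> V" "cover (h u) (h v)" using a unfolding Aiff by simp_all
    then have "rankC C (h v) < rankC C (h u)" using rank_strict hF unfolding cover_def by blast
    then show ?thesis unfolding r_def by simp
  qed
  have rV: "r ` V = real ` {..<card C}"
  proof -
    have "r ` V = real ` (rankC C ` (h ` V))" unfolding r_def by (simp add: image_comp o_def)
    also have "h ` V = F" using h unfolding bij_betw_def by simp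
    finally show ?thesis using ranks_onto[OF Xne] by simp
  qed
  have ts_eq: "ts_size V r = card C - 1"
    unfolding ts_size_def rV by (simp add: card_image inj_on_def)
  have int_eq: "{0..card C - 1} = {..<card C}" using Cpos by auto
  have rrange: "r ` V = real ` {0..ts_size V r}" using rV ts_eq int_eq by simp
  have RT: "ranked_tree X V A \<phi> r"
    by (rule SC[OF V(1) AV acyc rhoV nopar reach up phiV leaf branch rnn rphi rarc rrange])
  interpret t: rtree X V A \<phi> r by (unfold_locales) (rule RT)
  have clh: "t.cl u = h u" if u: "u \<in> V" for u
  proof -
    have "(u, \<phi> x) \<in> A\<^sup>* \<longleftrightarrow> x \<in> h u" if x: "x \<in> X" for x
    proof -
      have "(u, \<phi> x) \<in> A\<^sup>* \<longleftrightarrow> psi x \<subseteq> h u" using rt_iff[OF u phiV[OF x]] hphi[OF x] by simp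
      also have "\<dots> \<longleftrightarrow> x \<in> h u" using psi[OF x] hF[OF u] by blast
      finally show ?thesis .
    qed
    then show ?thesis unfolding t.cl_def using F_sub[OF hF[OF u]] by blast
  qed
  have Leq: "t.L i = hi ` Pk i" if i: "i < card C" for i
  proof
    have PiC: "Pk i \<in> C" using Pk_in[OF i] by simp
    show "t.L i \<subseteq> hi ` Pk i"
    proof
      fix u assume u: "u \<in> t.L i"
      have uV: "u \<in> V" using u unfolding t.L_iff by simp
      have "rankC C (h u) \<le> i" using u unfolding t.L_iff r_def by simp
      then obtain D where D: "D \<in> Pk i" "h u \<subseteq> D" using rank_le_iff[OF hF[OF uV] i] by blast
      have DF: "D \<in> F" unfolding F_def using D(1) PiC by blast
      have "h u = D"
      proof (rule ccontr)
        assume "h u \<noteq> D"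
        then have "h u \<subset> D" using D(2) by blast
        then obtain E where E: "E \<subseteq> D" "cover E (h u)" using cover_below[OF hF[OF uV] DF] by blast
        then have EF: "E \<in> F" unfolding cover_def by simp
        have "(hi E, u) \<in> A" unfolding Aiff using uV hiV[OF EF] hhi[OF EF] E(2) by simp
        then have "r (hi E) > real i" using u unfolding t.L_iff by blast
        moreover have "rankC C E \<le> i" using rank_le_iff[OF EF i] D(1) E(1) by blast
        ultimately show False unfolding r_def using hhi[OF EF] by simp
      qed
      then show "u \<in> hi ` Pk i" using D(1) hih[OF uV] by force
    qed
    show "hi ` Pk i \<subseteq> t.L i"
    proof
      fix u assume "u \<in> hi ` Pk i"
      then obtain B where B: "B \<in> Pk i" "u = hi B" by blast
      have BF: "B \<in> F" unfolding F_def using B(1) PiC by blast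
      have uV: "u \<in> V" and hu: "h u = B" using B(2) hiV[OF BF] hhi[OF BF] by simp_all
      have "rankC C B \<le> i" using rank_le_iff[OF BF i] B(1) by blast
      then have r1: "r u \<le> real i" unfolding r_def using hu by simp
      have r2: "\<forall>p. (p,u) \<in> A \<longrightarrow> r p > real i"
      proof (intro allI impI)
        fix p assume p: "(p,u) \<in> A"
        have pV: "p \<in> V" and cv: "cover (h p) B" using p hu unfolding Aiff by simp_all
        have "\<not> rankC C (h p) \<le> i"
        proof
          assume "rankC C (h p) \<le> i"
          then obtain D where D: "D \<in> Pk i" "h p \<subseteq> D" using rank_le_iff[OF hF[OF pV] i] by blast
          obtain x where x: "x \<in> B" using F_ne[OF BF] by blast
          have "B \<subset> D" using cv D(2) unfolding cover_def by blast
          moreover have "B = D" using part_disj[OF Cpart[OF PiC] B(1) D(1) x] x cv D(2) unfolding cover_def by blast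
          ultimately show False by simp
        qed
        then show "r p > real i" unfolding r_def by simp
      qed
      show "u \<in> t.L i" unfolding t.L_iff using uV r1 r2 by simp
    qed
  qed
  have sig: "t.\<sigma> = card C - 1" unfolding t.\<sigma>_def by (rule ts_eq)
  have "t.CT = C"
  proof
    show "t.CT \<subseteq> C"
    proof
      fix P assume "P \<in> t.CT"
      then obtain i where i: "i \<le> t.\<sigma>" "P = t.cl ` t.L i" unfolding t.CT_def by blast
      have il: "i < card C" using i(1) sig Cpos by simp
      have "P = t.cl ` hi ` Pk i" using i(2) Leq[OF il] by simp
      also have "\<dots> = Pk i"
      proof -
        have "B \<in> Pk i \<Longrightarrow> B \<in> F" for B unfolding F_def using Pk_in[OF il] by blast
        then have "\<And>B. B \<in> Pk i \<Longrightarrow> t.cl (hi B) = B" using clh hiV hhi by simp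
        then show ?thesis by (simp add: image_comp o_def cong: image_cong)
      qed
      finally show "P \<in> C" using Pk_in[OF il] by simp
    qed
    show "C \<subseteq> t.CT"
    proof
      fix P assume P: "P \<in> C"
      define i where "i = idx C P"
      have il: "i < card C" unfolding i_def by (rule idx_less[OF P])
      have PP: "Pk i = P" unfolding i_def by (rule Pk_idx[OF P])
      have "t.cl ` t.L i = t.cl ` hi ` Pk i" using Leq[OF il] by simp
      also have "\<dots> = Pk i"
      proof -
        have "B \<in> Pk i \<Longrightarrow> B \<in> F" for B unfolding F_def using Pk_in[OF il] by blast
        then have "\<And>B. B \<in> Pk i \<Longrightarrow> t.cl (hi B) = B" using clh hiV hhi by simp
        then show ?thesis by (simp add: image_comp o_def cong: image_cong)
      qed
      finally have "P = t.cl ` t.L i" using PP by simp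
      moreover have "i \<le> t.\<sigma>" using il sig by simp
      ultimately show "P \<in> t.CT" unfolding t.CT_def by blast
    qed
  qed
  then have "partition_chain_of X (V, A, \<phi>, r) = C" using t.chain_eq by simp
  moreover have "(V, A, \<phi>, r) \<in> ranked_trees X" unfolding ranked_trees_def using RT by simp
  ultimately show ?thesis by blast
qed

end


theorem mainTheorem3:
  fixes X :: "'x set"
  assumes "finite X" and "X \<noteq> {}"
    and "infinite (UNIV :: 'v set)"
  shows "(\<forall>T \<in> (ranked_trees X :: ('v set \<times> ('v \<times> 'v) set \<times> ('x \<Rightarrow> 'v) \<times> ('v \<Rightarrow> real)) set).
            partition_chain_of X T \<in> chains_with_top X)
       \<and> (\<forall>T1 \<in> (ranked_trees X :: ('v set \<times> ('v \<times> 'v) set \<times> ('x \<Rightarrow> 'v) \<times> ('v \<Rightarrow> real)) set).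
            \<forall>T2 \<in> ranked_trees X.
            partition_chain_of X T1 = partition_chain_of X T2 \<longleftrightarrow> ranked_iso X T1 T2)
       \<and> (\<forall>C \<in> chains_with_top X.
            \<exists>T \<in> (ranked_trees X :: ('v set \<times> ('v \<times> 'v) set \<times> ('x \<Rightarrow> 'v) \<times> ('v \<Rightarrow> real)) set).
            partition_chain_of X T = C)"
proof (intro conjI ballI)
  fix T :: "'v set \<times> ('v \<times> 'v) set \<times> ('x \<Rightarrow> 'v) \<times> ('v \<Rightarrow> real)"
  assume T: "T \<in> ranked_trees X"
  obtain V A \<phi> r where Te: "T = (V, A, \<phi>, r)" by (cases T) auto
  then have "rtree X V A \<phi> r" using T unfolding ranked_trees_def by (simp add: rtree_def)
  then show "partition_chain_of X T \<in> chains_with_top X"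
    using rtree.chain_eq rtree.CT_chain Te by metis
next
  fix T1 T2 :: "'v set \<times> ('v \<times> 'v) set \<times> ('x \<Rightarrow> 'v) \<times> ('v \<Rightarrow> real)"
  assume T1: "T1 \<in> ranked_trees X" and T2: "T2 \<in> ranked_trees X"
  obtain V1 A1 \<phi>1 r1 where Te1: "T1 = (V1, A1, \<phi>1, r1)" by (cases T1) auto
  obtain V2 A2 \<phi>2 r2 where Te2: "T2 = (V2, A2, \<phi>2, r2)" by (cases T2) auto
  have R1: "rtree X V1 A1 \<phi>1 r1" using T1 Te1 unfolding ranked_trees_def by (simp add: rtree_def)
  have R2: "rtree X V2 A2 \<phi>2 r2" using T2 Te2 unfolding ranked_trees_def by (simp add: rtree_def)
  have c1: "partition_chain_of X T1 = rtree.CT X V1 A1 \<phi>1 r1" using rtree.chain_eq[OF R1] Te1 by simp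
  have c2: "partition_chain_of X T2 = rtree.CT X V2 A2 \<phi>2 r2" using rtree.chain_eq[OF R2] Te2 by simp
  show "partition_chain_of X T1 = partition_chain_of X T2 \<longleftrightarrow> ranked_iso X T1 T2"
  proof
    assume "partition_chain_of X T1 = partition_chain_of X T2"
    then show "ranked_iso X T1 T2" using iso_of_eq[OF R1 R2] c1 c2 Te1 Te2 by simp
  next
    assume "ranked_iso X T1 T2"
    then show "partition_chain_of X T1 = partition_chain_of X T2"
      using eq_of_iso[OF R1 R2] c1 c2 Te1 Te2 by simp
  qed
next
  fix C assume C: "C \<in> chains_with_top X"
  interpret c: chainC X C by (unfold_locales) (rule C, rule assms(1))
  show "\<exists>T \<in> (ranked_trees X :: ('v set \<times> ('v \<times> 'v) set \<times> ('x \<Rightarrow> 'v) \<times> ('v \<Rightarrow> real)) set).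
            partition_chain_of X T = C"
    by (rule c.construct[OF assms(2) assms(3)])
qed


end
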